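(* For integers $a_1,a_2,D$ with $D\neq0$, $\varepsilon>0$ and $z$ in the complex upper half-plane, set \[\sigma_\varepsilon(z;a_1,a_2,D)=\sum_{\substack{(m,n)\in\mathbf{Z}^2\\ a_1+Dm\neq0}}\frac{1}{(z(a_1+Dm)+a_2+Dn)^2\,|z(a_1+Dm)+a_2+Dn|^{2\varepsilon}}.\] Then $\lim_{\mathrm{Im}(z)\to\infty}\lim_{\varepsilon\to0^+}\sigma_\varepsilon(z;a_1,a_2,D)=0$. *)

theory Defs
  imports "HOL-Analysis.Analysis"
begin

definition sigma_eps :: "real \<Rightarrow> complex \<Rightarrow> int \<Rightarrow> int \<Rightarrow> int \<Rightarrow> complex" where
  "sigma_eps eps z a1 a2 D =
     (\<Sum>\<^sub>\<infinity>(m, n) \<in> {(m::int, n::int). a1 + D * m \<noteq> 0}.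
        (let w = z * of_int (a1 + D * m) + of_int (a2 + D * n)
         in 1 / (w ^ 2 * complex_of_real (cmod w powr (2 * eps)))))"

end

theory Submission
  imports Defs "HOL-Probability.Sinc_Integral"
begin

lemma interval_bound:
  fixes \<phi> \<phi>' :: "real \<Rightarrow> complex"
  assumes deriv: "\<And>t. (\<phi> has_vector_derivative \<phi>' t) (at t)"
    and cont: "continuous_on UNIV \<phi>'"
    and h: "h > 0" and int1: "integrable lborel \<phi>" and int2: "integrable lborel \<phi>'"
  shows "norm (\<phi> a - (1/h) *\<^sub>R (LBINT x. indicator {a..<a+h} x *\<^sub>R \<phi> x))
           \<le> (LBINT x. indicator {a..<a+h} x *\<^sub>R norm (\<phi>' x))"
proof -
  define V where "V = (LBINT x. indicator {a..<a+h} x *\<^sub>R norm (\<phi>' x))"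
  have intn: "integrable lborel (\<lambda>x. norm (\<phi>' x))" using int2 by auto
  have pt: "norm (\<phi> a - \<phi> x) \<le> V" if x: "x \<in> {a..<a+h}" for x
  proof -
    have "(LBINT t. indicator {a..x} t *\<^sub>R \<phi>' t) = \<phi> x - \<phi> a"
      using x by (intro integral_FTC_atLeastAtMost)
        (auto intro: has_vector_derivative_at_within deriv continuous_on_subset[OF cont])
    hence "norm (\<phi> a - \<phi> x) = norm (LBINT t. indicator {a..x} t *\<^sub>R \<phi>' t)"
      by (simp add: norm_minus_commute)
    also have "\<dots> \<le> (LBINT t. norm (indicator {a..x} t *\<^sub>R \<phi>' t))"
      by (rule integral_norm_bound)
    also have "\<dots> \<le> V" unfolding V_def
      using x
      by (intro integral_mono integrable_mult_indicator intn integrable_norm int2)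
         (auto split: split_indicator)
    finally show ?thesis .
  qed
  have intphi: "integrable lborel (\<lambda>x. indicator {a..<a+h} x *\<^sub>R \<phi> x)"
    by (intro integrable_mult_indicator int1) auto
  have intc: "integrable lborel (\<lambda>x. indicator {a..<a+h} x *\<^sub>R \<phi> a)"
    using h by (intro integrable_scaleR_left integrable_real_indicator) (auto simp: emeasure_lborel_Ico)
  have c: "(LBINT x. indicator {a..<a+h} x *\<^sub>R \<phi> a) = h *\<^sub>R \<phi> a"
    using h by (simp add: integral_scaleR_left)
  have "\<phi> a - (1/h) *\<^sub>R (LBINT x. indicator {a..<a+h} x *\<^sub>R \<phi> x)
        = (1/h) *\<^sub>R (LBINT x. indicator {a..<a+h} x *\<^sub>R (\<phi> a - \<phi> x))"
    using h intphi intc by (simp add: c algebra_simps Bochner_Integration.integral_diff)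
  also have "norm \<dots> \<le> (1/h) * (LBINT x. norm (indicator {a..<a+h} x *\<^sub>R (\<phi> a - \<phi> x)))"
    using h integral_norm_bound[of lborel "\<lambda>x. indicator {a..<a+h} x *\<^sub>R (\<phi> a - \<phi> x)"]
    by (simp add: divide_right_mono)
  also have "\<dots> \<le> (1/h) * (LBINT x. indicator {a..<a+h} x *\<^sub>R V)"
  proof -
    have "integrable lborel (\<lambda>x. norm (indicator {a..<a+h} x *\<^sub>R (\<phi> a - \<phi> x)))"
      by (intro integrable_norm) (simp add: scaleR_diff_right Bochner_Integration.integrable_diff[OF intc intphi])
    then have i1: "integrable lborel (\<lambda>x. indicator {a..<a+h} x * norm (\<phi> a - \<phi> x))"
      by simp
    have i2: "integrable lborel (\<lambda>x. indicator {a..<a+h} x * V)"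
      using h by (intro integrable_mult_left integrable_real_indicator) (auto simp: emeasure_lborel_Ico)
    show ?thesis
      using h pt i1 i2
      by (intro mult_left_mono integral_mono) (auto split: split_indicator)
  qed
  also have "\<dots> = V" using h by simp
  finally show ?thesis unfolding V_def .
qed

lemma has_sum_partition_int:
  fixes \<psi> :: "real \<Rightarrow> 'a::{banach, second_countable_topology}"
  assumes int: "integrable lborel \<psi>" and h: "h > 0"
  shows "((\<lambda>k::int. LBINT x. indicator {(c + h * of_int k)..<(c + h * of_int k + h)} x *\<^sub>R \<psi> x)
          has_sum (LBINT x. \<psi> x)) UNIV"
proof -
  define I where "I k = {(c + h * of_int k)..<(c + h * of_int k + h)}" for k :: int
  have Iin: "x \<in> I k \<longleftrightarrow> k = \<lfloor>(x - c)/h\<rfloor>" for x k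
  proof -
    have "x \<in> I k \<longleftrightarrow> of_int k \<le> (x - c)/h \<and> (x - c)/h < of_int k + 1"
      using h by (auto simp: I_def field_simps)
    also have "\<dots> \<longleftrightarrow> k = \<lfloor>(x - c)/h\<rfloor>"
      by (metis floor_eq_iff)
    finally show ?thesis .
  qed
  define A where "A i = I (int_decode i)" for i
  have disj: "A i \<inter> A j = {}" if "i \<noteq> j" for i j
    using that inj_int_decode[unfolded inj_def] by (auto simp: A_def Iin) (metis inj_int_decode injD)
  have Un: "(\<Union>i. A i) = UNIV"
  proof safe
    fix x :: real
    obtain i where "int_decode i = \<lfloor>(x - c)/h\<rfloor>" using surj_int_decode by (metis surjD)
    then show "x \<in> (\<Union>i. A i)" by (auto simp: A_def Iin)
  qed auto
  have meas: "A i \<in> sets lborel" for i by (simp add: A_def I_def)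
  have sint: "set_integrable lborel (\<Union>i. A i) \<psi>"
    using int by (simp add: Un set_integrable_def)
  have eq: "(LINT x:(\<Union>i. A i)|lborel. \<psi> x) = (\<Sum>i. (LINT x:(A i)|lborel. \<psi> x))"
    by (rule lebesgue_integral_countable_add[OF meas disj sint])
  have intA: "set_integrable lborel (A i) (\<lambda>x. norm (\<psi> x))" for i
    using int unfolding set_integrable_def by (intro integrable_mult_indicator meas integrable_norm)
  have sumn: "summable (\<lambda>i. LINT x:(A i)|lborel. norm (\<psi> x))"
  proof (rule summableI_nonneg_bounded)
    fix n
    show "0 \<le> (LINT x:(A n)|lborel. norm (\<psi> x))"
      unfolding set_lebesgue_integral_def by (intro integral_nonneg_AE) auto
    have "(\<Sum>i<n. LINT x:(A i)|lborel. norm (\<psi> x)) = (LINT x:(\<Union>i\<in>{..<n}. A i)|lborel. norm (\<psi> x))"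
      using intA meas disj
      by (subst set_integral_finite_Union) (auto simp: disjoint_family_on_def)
    also have "\<dots> \<le> (LBINT x. norm (\<psi> x))"
      unfolding set_lebesgue_integral_def
      using int set_integrable_UN[of "{..<n}" lborel A "\<lambda>x. norm (\<psi> x)"] intA meas
      by (intro integral_mono) (auto simp: set_integrable_def split: split_indicator)
    finally show "(\<Sum>i<n. LINT x:(A i)|lborel. norm (\<psi> x)) \<le> (LBINT x. norm (\<psi> x))" .
  qed
  have sumn2: "summable (\<lambda>i. norm (LINT x:(A i)|lborel. \<psi> x))"
  proof (rule summable_comparison_test[OF _ sumn])
    show "\<exists>N. \<forall>n\<ge>N. norm (norm (LINT x:(A n)|lborel. \<psi> x)) \<le> (LINT x:(A n)|lborel. norm (\<psi> x))"
    proof (intro exI[of _ 0] allI impI)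
      fix n :: nat
      have "set_integrable lborel (A n) \<psi>"
        unfolding set_integrable_def by (rule integrable_mult_indicator[OF meas int])
      then show "norm (norm (LINT x:(A n)|lborel. \<psi> x)) \<le> (LINT x:(A n)|lborel. norm (\<psi> x))"
        by (simp add: set_integral_norm_bound)
    qed
  qed
  have "(\<lambda>i. LINT x:(A i)|lborel. \<psi> x) sums (LINT x:(\<Union>i. A i)|lborel. \<psi> x)"
    unfolding eq by (rule summable_sums[OF summable_norm_cancel[OF sumn2]])
  moreover have "(LINT x:(\<Union>i. A i)|lborel. \<psi> x) = (LBINT x. \<psi> x)"
    unfolding Un set_lebesgue_integral_def by simp
  ultimately have "(\<lambda>i. LINT x:(A i)|lborel. \<psi> x) sums (LBINT x. \<psi> x)" by simp
  then have "((\<lambda>i. LINT x:(A i)|lborel. \<psi> x) has_sum (LBINT x. \<psi> x)) UNIV"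
    by (rule norm_summable_imp_has_sum[OF sumn2])
  then have "((\<lambda>i. (\<lambda>k. LINT x:(I k)|lborel. \<psi> x) (int_decode i)) has_sum (LBINT x. \<psi> x)) UNIV"
    by (simp only: A_def)
  then have "((\<lambda>k. LINT x:(I k)|lborel. \<psi> x) has_sum (LBINT x. \<psi> x)) UNIV"
    by (rule has_sum_reindex_bij_betw[OF bij_int_decode, THEN iffD1])
  then show ?thesis by (simp only: I_def set_lebesgue_integral_def)
qed

lemma lattice_compare:
  fixes \<phi> \<phi>' :: "real \<Rightarrow> complex"
  assumes deriv: "\<And>t. (\<phi> has_vector_derivative \<phi>' t) (at t)"
    and cont: "continuous_on UNIV \<phi>'"
    and h: "h > 0" and int1: "integrable lborel \<phi>" and int2: "integrable lborel \<phi>'"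
  shows "(\<lambda>n::int. norm (\<phi> (c + h * of_int n))) summable_on UNIV"
    and "norm ((\<Sum>\<^sub>\<infinity>n::int. \<phi> (c + h * of_int n)) - (1/h) *\<^sub>R (LBINT x. \<phi> x))
           \<le> (LBINT x. norm (\<phi>' x))"
    and "(\<Sum>\<^sub>\<infinity>n::int. norm (\<phi> (c + h * of_int n)))
           \<le> (1/h) * (LBINT x. norm (\<phi> x)) + (LBINT x. norm (\<phi>' x))"
proof -
  define P where "P k = (LBINT x. indicator {(c + h * of_int k)..<(c + h * of_int k + h)} x *\<^sub>R \<phi> x)" for k :: int
  define Q where "Q k = (LBINT x. indicator {(c + h * of_int k)..<(c + h * of_int k + h)} x *\<^sub>R norm (\<phi>' x))" for k :: int
  define R where "R k = (LBINT x. indicator {(c + h * of_int k)..<(c + h * of_int k + h)} x *\<^sub>R norm (\<phi> x))" for k :: int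
  have hP: "(P has_sum (LBINT x. \<phi> x)) UNIV"
    unfolding P_def by (rule has_sum_partition_int[OF int1 h])
  have hQ: "(Q has_sum (LBINT x. norm (\<phi>' x))) UNIV"
    unfolding Q_def by (rule has_sum_partition_int[OF integrable_norm[OF int2] h])
  have hR: "(R has_sum (LBINT x. norm (\<phi> x))) UNIV"
    unfolding R_def by (rule has_sum_partition_int[OF integrable_norm[OF int1] h])
  have K1: "norm (\<phi> (c + h * of_int k) - (1/h) *\<^sub>R P k) \<le> Q k" for k
    unfolding P_def Q_def by (rule interval_bound[OF deriv cont h int1 int2])
  have PR: "norm (P k) \<le> R k" for k
  proof -
    have "norm (P k) \<le> (LBINT x. norm (indicator {(c + h * of_int k)..<(c + h * of_int k + h)} x *\<^sub>R \<phi> x))"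
      unfolding P_def by (rule integral_norm_bound)
    also have "\<dots> = R k" unfolding R_def by simp
    finally show ?thesis .
  qed
  have Q0: "Q k \<ge> 0" for k unfolding Q_def by (intro integral_nonneg_AE) auto
  have R0: "R k \<ge> 0" for k unfolding R_def by (intro integral_nonneg_AE) auto
  have bnd: "norm (\<phi> (c + h * of_int k)) \<le> (1/h) * R k + Q k" for k
  proof -
    have "norm (\<phi> (c + h * of_int k)) \<le> norm ((1/h) *\<^sub>R P k) + norm (\<phi> (c + h * of_int k) - (1/h) *\<^sub>R P k)"
      by (metis add.commute diff_add_cancel norm_triangle_ineq)
    also have "\<dots> \<le> (1/h) * R k + Q k"
      using K1[of k] PR[of k] h by (intro add_mono) (auto simp: divide_right_mono)
    finally show ?thesis .
  qed
  have sRQ: "((\<lambda>k. (1/h) * R k + Q k) has_sum ((1/h) * (LBINT x. norm (\<phi> x)) + (LBINT x. norm (\<phi>' x)))) UNIV"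
    by (intro has_sum_add has_sum_cmult_right hR hQ)
  show sn: "(\<lambda>n::int. norm (\<phi> (c + h * of_int n))) summable_on UNIV"
    using bnd by (intro summable_on_comparison_test[OF has_sum_imp_summable[OF sRQ]]) auto
  show "(\<Sum>\<^sub>\<infinity>n::int. norm (\<phi> (c + h * of_int n)))
           \<le> (1/h) * (LBINT x. norm (\<phi> x)) + (LBINT x. norm (\<phi>' x))"
    using infsum_mono[OF sn has_sum_imp_summable[OF sRQ] bnd] infsumI[OF sRQ] by simp
  have sphi: "(\<lambda>n::int. \<phi> (c + h * of_int n)) summable_on UNIV"
    using sn by (simp add: summable_on_iff_abs_summable_on_complex)
  have sd: "((\<lambda>k. \<phi> (c + h * of_int k) - (1/h) *\<^sub>R P k) has_sum
           ((\<Sum>\<^sub>\<infinity>n::int. \<phi> (c + h * of_int n)) - (1/h) *\<^sub>R (LBINT x. \<phi> x))) UNIV"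
  proof -
    have "((\<lambda>k. \<phi> (c + h * of_int k) + (-(1/h)) *\<^sub>R P k) has_sum
           ((\<Sum>\<^sub>\<infinity>n::int. \<phi> (c + h * of_int n)) + (-(1/h)) *\<^sub>R (LBINT x. \<phi> x))) UNIV"
      by (intro has_sum_add has_sum_scaleR hP has_sum_infsum sphi)
    then show ?thesis by (simp only: scaleR_minus_left add_uminus_conv_diff)
  qed
  have snd: "(\<lambda>k. norm (\<phi> (c + h * of_int k) - (1/h) *\<^sub>R P k)) summable_on UNIV"
    using K1 by (intro summable_on_comparison_test[OF has_sum_imp_summable[OF hQ]]) auto
  have "norm ((\<Sum>\<^sub>\<infinity>n::int. \<phi> (c + h * of_int n)) - (1/h) *\<^sub>R (LBINT x. \<phi> x))
        = norm (\<Sum>\<^sub>\<infinity>k. \<phi> (c + h * of_int k) - (1/h) *\<^sub>R P k)"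
    using infsumI[OF sd] by simp
  also have "\<dots> \<le> (\<Sum>\<^sub>\<infinity>k. norm (\<phi> (c + h * of_int k) - (1/h) *\<^sub>R P k))"
    by (rule norm_infsum_bound[OF snd])
  also have "\<dots> \<le> (\<Sum>\<^sub>\<infinity>k. Q k)"
    by (rule infsum_mono[OF snd has_sum_imp_summable[OF hQ] K1])
  also have "\<dots> = (LBINT x. norm (\<phi>' x))" using infsumI[OF hQ] .
  finally show "norm ((\<Sum>\<^sub>\<infinity>n::int. \<phi> (c + h * of_int n)) - (1/h) *\<^sub>R (LBINT x. \<phi> x))
           \<le> (LBINT x. norm (\<phi>' x))" .
qed

lemma infsum_tendsto_dominated:
  fixes f :: "'b \<Rightarrow> 'a \<Rightarrow> complex" and M :: "'a \<Rightarrow> real"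
  assumes M: "M summable_on A"
    and bound: "\<forall>\<^sub>F e in F. \<forall>k\<in>A. norm (f e k) \<le> M k"
    and lim: "\<And>k. k \<in> A \<Longrightarrow> ((\<lambda>e. f e k) \<longlongrightarrow> g k) F"
  shows "((\<lambda>e. infsum (f e) A) \<longlongrightarrow> infsum g A) F"
proof (cases "F = bot")
  case True then show ?thesis by simp
next
  case nb: False
  have gM: "norm (g k) \<le> M k" if k: "k \<in> A" for k
  proof (rule tendsto_upperbound[OF tendsto_norm[OF lim[OF k]] _ nb])
    show "\<forall>\<^sub>F e in F. norm (f e k) \<le> M k"
      using bound by eventually_elim (use k in blast)
  qed
  have M0: "M k \<ge> 0" if "k \<in> A" for k using gM[OF that] norm_ge_zero order_trans by blast
  have sg: "g summable_on A"
    unfolding summable_on_iff_abs_summable_on_complex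
    using gM by (intro summable_on_comparison_test[OF M]) auto
  have sf: "\<forall>\<^sub>F e in F. f e summable_on A \<and> (\<forall>k\<in>A. norm (f e k) \<le> M k)"
    using bound
  proof eventually_elim
    case (elim e)
    then show ?case
      unfolding summable_on_iff_abs_summable_on_complex
      by (auto intro: summable_on_comparison_test[OF M])
  qed
  show ?thesis
  proof (rule tendstoI)
    fix \<delta> :: real assume \<delta>: "\<delta> > 0"
    have "\<forall>\<^sub>F X in finite_subsets_at_top A. dist (sum M X) (infsum M A) < \<delta>/3"
      using infsum_tendsto[OF M] \<delta> by (intro tendstoD) auto
    then obtain X where X: "finite X" "X \<subseteq> A" "dist (sum M X) (infsum M A) < \<delta>/3"
      unfolding eventually_finite_subsets_at_top by blast
    have sMX: "M summable_on (A - X)" using M by (rule summable_on_subset_banach) auto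
    have "infsum M A = infsum M X + infsum M (A - X)"
      using infsum_Un_disjoint[of M X "A - X"] X sMX by (simp add: Un_absorb1)
    then have tail: "infsum M (A - X) < \<delta>/3"
      using X by (simp add: dist_real_def)
    have "((\<lambda>e. \<Sum>k\<in>X. f e k) \<longlongrightarrow> (\<Sum>k\<in>X. g k)) F"
      using X by (intro tendsto_sum lim) auto
    then have ev: "\<forall>\<^sub>F e in F. dist (\<Sum>k\<in>X. f e k) (\<Sum>k\<in>X. g k) < \<delta>/3"
      using \<delta> by (intro tendstoD) auto
    show "\<forall>\<^sub>F e in F. dist (infsum (f e) A) (infsum g A) < \<delta>"
      using ev sf
    proof eventually_elim
      case (elim e)
      define d where "d k = f e k - g k" for k
      have sd: "d summable_on A" unfolding d_def
        using summable_on_add[OF conjunct1[OF elim(2)] summable_on_uminus[THEN iffD2, OF sg]] by simp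
      have sdX: "d summable_on (A - X)" by (rule summable_on_subset_banach[OF sd]) auto
      have nd: "norm (d k) \<le> 2 * M k" if "k \<in> A" for k
      proof -
        have "norm (f e k) \<le> M k" using elim(2) that by blast
        then show ?thesis unfolding d_def
          using norm_triangle_ineq4[of "f e k" "g k"] gM[OF that] by linarith
      qed
      have sndX: "(\<lambda>k. norm (d k)) summable_on (A - X)"
        using sdX by (simp add: summable_on_iff_abs_summable_on_complex)
      have "infsum (f e) A - infsum g A = infsum d A"
        unfolding d_def
        using infsum_add[OF conjunct1[OF elim(2)] summable_on_uminus[THEN iffD2, OF sg]]
        by (simp add: infsum_uminus)
      also have "\<dots> = infsum d X + infsum d (A - X)"
        using infsum_Un_disjoint[of d X "A - X"] X sdX by (simp add: Un_absorb1)
      finally have eq: "infsum (f e) A - infsum g A = (\<Sum>k\<in>X. d k) + infsum d (A - X)"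
        using X by simp
      have "norm (infsum d (A - X)) \<le> infsum (\<lambda>k. norm (d k)) (A - X)"
        by (rule norm_infsum_bound[OF sndX])
      also have "\<dots> \<le> infsum (\<lambda>k. 2 * M k) (A - X)"
        using nd by (intro infsum_mono sndX summable_on_cmult_right sMX) auto
      also have "\<dots> = 2 * infsum M (A - X)" by (rule infsum_cmult_right') 
      finally have "norm (infsum d (A - X)) < 2 * \<delta> / 3" using tail by simp
      moreover have "norm (\<Sum>k\<in>X. d k) < \<delta>/3"
        using elim(1) by (simp add: d_def dist_norm sum_subtractf)
      ultimately show ?case
        unfolding dist_norm eq
        using norm_triangle_ineq[of "\<Sum>k\<in>X. d k" "infsum d (A - X)"] by linarith
    qed
  qed
qed

lemma tele_core:
  fixes r d s :: real
  assumes r: "r > 0" and d: "d > 0" and s: "s > 1"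
  shows "summable (\<lambda>k::nat. (r + d * real k) powr (-s))"
    and "r powr (1 - s) / (d * (s - 1)) \<le> (\<Sum>k. (r + d * real k) powr (-s))"
    and "(\<Sum>k. (r + d * real k) powr (-s)) \<le> r powr (1 - s) / (d * (s - 1)) + r powr (-s)"
proof -
  define f where "f x = (r + d * x) powr (-s)" for x :: real
  define F where "F x = (r + d * x) powr (1 - s) / (d * (s - 1))" for x :: real
  have derivF: "(F has_real_derivative - f x) (at x)" if "x \<ge> 0" for x
  proof -
    have pos: "r + d * x > 0" using that r d by (simp add: add_pos_nonneg)
    have "((\<lambda>x. (r + d * x) powr (1 - s) / (d * (s - 1))) has_real_derivative
           ((1 - s) * (r + d * x) powr (1 - s - 1) * d / (d * (s - 1)))) (at x)"
      using pos d s by (auto intro!: derivative_eq_intros)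
    moreover have "(1 - s) * (r + d * x) powr (1 - s - 1) * d / (d * (s - 1)) = - f x"
      using d s by (simp add: f_def field_simps)
    ultimately show ?thesis unfolding F_def[abs_def] by metis
  qed
  have fmono: "f y \<le> f x" if "0 \<le> x" "x \<le> y" for x y
    unfolding f_def using that r d s
    by (intro powr_mono2') (auto intro: add_pos_nonneg mult_left_mono)
  have step: "f (real k + 1) \<le> F (real k) - F (real k + 1) \<and> F (real k) - F (real k + 1) \<le> f (real k)" for k :: nat
  proof -
    obtain z where z: "real k < z" "z < real k + 1" "F (real k + 1) - F (real k) = (real k + 1 - real k) * (- f z)"
      using MVT2[of "real k" "real k + 1" F "\<lambda>x. - f x"] derivF by force
    have "f (real k + 1) \<le> f z" "f z \<le> f (real k)" using z by (auto intro!: fmono)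
    then show ?thesis using z(3) by simp
  qed
  have f0: "f x \<ge> 0" for x by (simp add: f_def)
  have F0: "F x \<ge> 0" for x using d s by (simp add: F_def)
  have telesc: "(\<Sum>k<N. F (real k) - F (real k + 1)) = F 0 - F (real N)" for N
    using sum_lessThan_telescope'[of "\<lambda>k. F (real k)" N] by (simp add: add.commute)
  have upper: "(\<Sum>k<N. f (real k + 1)) \<le> F 0" for N
  proof -
    have "(\<Sum>k<N. f (real k + 1)) \<le> (\<Sum>k<N. F (real k) - F (real k + 1))"
      using step by (intro sum_mono) auto
    then show ?thesis using telesc[of N] F0[of "real N"] by linarith
  qed
  have lower: "F 0 - F (real N) \<le> (\<Sum>k<N. f (real k))" for N
  proof -
    have "(\<Sum>k<N. F (real k) - F (real k + 1)) \<le> (\<Sum>k<N. f (real k))"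
      using step by (intro sum_mono) auto
    then show ?thesis using telesc[of N] by linarith
  qed
  have sS: "summable (\<lambda>k. f (real (Suc k)))"
    using upper f0 by (intro summableI_nonneg_bounded[of _ "F 0"]) (auto simp: add.commute)
  then have sf: "summable (\<lambda>k. f (real k))" by (subst summable_Suc_iff[symmetric])
  then show "summable (\<lambda>k::nat. (r + d * real k) powr (-s))" by (simp add: f_def)
  have "(\<Sum>k. f (real (Suc k))) \<le> F 0"
    using sS upper by (intro suminf_le_const) (auto simp: add.commute)
  moreover have "(\<Sum>k. f (real k)) = f 0 + (\<Sum>k. f (real (Suc k)))"
    using suminf_split_head[OF sf] by simp
  ultimately show "(\<Sum>k. (r + d * real k) powr (-s)) \<le> r powr (1 - s) / (d * (s - 1)) + r powr (-s)"
    by (simp add: f_def F_def)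
  have FN: "(\<lambda>N. F (real N)) \<longlonglongrightarrow> 0"
  proof -
    have "filterlim (\<lambda>N::nat. r + d * real N) at_top sequentially"
      using d by (intro filterlim_tendsto_add_at_top[OF tendsto_const] filterlim_tendsto_pos_mult_at_top[OF tendsto_const d filterlim_real_sequentially])
    then have "(\<lambda>N::nat. (r + d * real N) powr (1 - s)) \<longlonglongrightarrow> 0"
      using s by (intro tendsto_neg_powr) auto
    then show ?thesis unfolding F_def by (intro tendsto_divide_zero)
  qed
  have "(\<lambda>N. F 0 - F (real N)) \<longlonglongrightarrow> F 0 - 0" by (intro tendsto_intros FN)
  moreover have "(\<lambda>N. \<Sum>k<N. f (real k)) \<longlonglongrightarrow> (\<Sum>k. f (real k))"
    using sf by (simp add: summable_LIMSEQ)
  ultimately have "F 0 - 0 \<le> (\<Sum>k. f (real k))"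
    using lower by (intro LIMSEQ_le) auto
  then show "r powr (1 - s) / (d * (s - 1)) \<le> (\<Sum>k. (r + d * real k) powr (-s))"
    by (simp add: f_def F_def)
qed

lemma pos_part_pos:
  fixes a D :: int assumes D: "D > 0"
  obtains r :: real where "r > 0" and
    "\<And>s. s > 1 \<Longrightarrow> \<exists>S. ((\<lambda>m. real_of_int (a + D * m) powr (-s)) has_sum S) {m. a + D * m > 0} \<and>
          r powr (1 - s) / (real_of_int D * (s - 1)) \<le> S \<and>
          S \<le> r powr (1 - s) / (real_of_int D * (s - 1)) + r powr (-s)"
proof -
  define q where "q = (-a) div D"
  define \<rho> where "\<rho> = (-a) mod D"
  have qr: "q * D + \<rho> = -a" unfolding q_def \<rho>_def by (rule div_mult_mod_eq)
  have \<rho>: "0 \<le> \<rho>" "\<rho> < D" unfolding \<rho>_def using D by auto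
  have Dq: "D * q = -a - \<rho>" using qr by (simp add: mult.commute eq_diff_eq)
  define m0 where "m0 = q + 1"
  have iff: "a + D * m > 0 \<longleftrightarrow> m \<ge> m0" for m
  proof
    assume "a + D * m > 0"
    then have "D * q < D * m" using Dq \<rho> by linarith
    then have "q < m" using D by (simp add: mult_less_cancel_left_pos)
    then show "m \<ge> m0" by (simp add: m0_def)
  next
    assume "m \<ge> m0"
    then have "D * m \<ge> D * (q + 1)" using D unfolding m0_def by (intro mult_left_mono) auto
    then show "a + D * m > 0" using Dq \<rho> by (simp add: algebra_simps)
  qed
  define r where "r = real_of_int (a + D * m0)"
  have "a + D * m0 > 0" using iff[of m0] by simp
  then have r: "r > 0" unfolding r_def by (simp only: of_int_0_less_iff)
  define g where "g k = m0 + int k" for k :: nat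
  have bij: "bij_betw g UNIV {m. a + D * m > 0}"
    unfolding bij_betw_def
  proof
    show "inj g" unfolding g_def by (auto intro: injI)
    show "range g = {m. a + D * m > 0}"
    proof safe
      fix k show "a + D * g k > 0" unfolding iff g_def by simp
    next
      fix m assume "a + D * m > 0"
      then have "m \<ge> m0" using iff by blast
      then have "m = g (nat (m - m0))" unfolding g_def by simp
      then show "m \<in> range g" by blast
    qed
  qed
  have val: "real_of_int (a + D * g k) = r + real_of_int D * real k" for k
    unfolding g_def r_def by (simp add: algebra_simps)
  show ?thesis
  proof (rule that[OF r])
    fix s :: real assume s: "s > 1"
    note tc = tele_core[OF r _ s, of "real_of_int D"]
    have Dp: "real_of_int D > 0" using D by simp
    define S where "S = (\<Sum>k. (r + real_of_int D * real k) powr (-s))"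
    have "((\<lambda>k. (r + real_of_int D * real k) powr (-s)) has_sum S) UNIV"
      unfolding S_def using tc(1)[OF Dp]
      by (intro norm_summable_imp_has_sum summable_sums) auto
    then have "((\<lambda>k. (\<lambda>m. real_of_int (a + D * m) powr (-s)) (g k)) has_sum S) UNIV"
      unfolding val .
    then have "((\<lambda>m. real_of_int (a + D * m) powr (-s)) has_sum S) {m. a + D * m > 0}"
      by (rule has_sum_reindex_bij_betw[OF bij, THEN iffD1])
    then show "\<exists>S. ((\<lambda>m. real_of_int (a + D * m) powr (-s)) has_sum S) {m. a + D * m > 0} \<and>
          r powr (1 - s) / (real_of_int D * (s - 1)) \<le> S \<and>
          S \<le> r powr (1 - s) / (real_of_int D * (s - 1)) + r powr (-s)"
      using tc(2,3)[OF Dp] unfolding S_def by blast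
  qed
qed

lemma pos_part:
  fixes a D :: int assumes D: "D \<noteq> 0"
  obtains r :: real where "r > 0" and
    "\<And>s. s > 1 \<Longrightarrow> \<exists>S. ((\<lambda>m. real_of_int (a + D * m) powr (-s)) has_sum S) {m. a + D * m > 0} \<and>
          r powr (1 - s) / (real_of_int \<bar>D\<bar> * (s - 1)) \<le> S \<and>
          S \<le> r powr (1 - s) / (real_of_int \<bar>D\<bar> * (s - 1)) + r powr (-s)"
proof (cases "D > 0")
  case True
  then show ?thesis using pos_part_pos[OF True, of a] that by auto
next
  case False
  then have D': "-D > 0" using D by simp
  obtain r where r: "r > 0" and H: "\<And>s. s > 1 \<Longrightarrow> \<exists>S. ((\<lambda>m. real_of_int (a + (-D) * m) powr (-s)) has_sum S) {m. a + (-D) * m > 0} \<and>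
          r powr (1 - s) / (real_of_int (-D) * (s - 1)) \<le> S \<and>
          S \<le> r powr (1 - s) / (real_of_int (-D) * (s - 1)) + r powr (-s)"
    using pos_part_pos[OF D', of a] by blast
  have bij: "bij_betw uminus {m. a + (-D) * m > 0} {m. a + D * m > 0}"
    by (rule bij_betwI[of _ _ _ uminus]) auto
  have absD: "real_of_int \<bar>D\<bar> = real_of_int (-D)" using False by simp
  show ?thesis
  proof (rule that[OF r])
    fix s :: real assume s: "s > 1"
    obtain S where S: "((\<lambda>m. real_of_int (a + (-D) * m) powr (-s)) has_sum S) {m. a + (-D) * m > 0}"
      "r powr (1 - s) / (real_of_int (-D) * (s - 1)) \<le> S"
      "S \<le> r powr (1 - s) / (real_of_int (-D) * (s - 1)) + r powr (-s)"
      using H[OF s] by blast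
    have "((\<lambda>m. (\<lambda>m. real_of_int (a + D * m) powr (-s)) (- m)) has_sum S) {m. a + (-D) * m > 0}"
      using S(1) by simp
    then have "((\<lambda>m. real_of_int (a + D * m) powr (-s)) has_sum S) {m. a + D * m > 0}"
      by (rule has_sum_reindex_bij_betw[OF bij, THEN iffD1])
    then show "\<exists>S. ((\<lambda>m. real_of_int (a + D * m) powr (-s)) has_sum S) {m. a + D * m > 0} \<and>
          r powr (1 - s) / (real_of_int \<bar>D\<bar> * (s - 1)) \<le> S \<and>
          S \<le> r powr (1 - s) / (real_of_int \<bar>D\<bar> * (s - 1)) + r powr (-s)"
      using S(2,3) unfolding absD by blast
  qed
qed

lemma zeta_like:
  fixes a D :: int assumes D: "D \<noteq> 0"
  shows "\<And>s. s > 1 \<Longrightarrow> (\<lambda>m. \<bar>real_of_int (a + D * m)\<bar> powr (-s)) summable_on {m. a + D * m \<noteq> 0}"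
    and "((\<lambda>e. e * (\<Sum>\<^sub>\<infinity>m\<in>{m. a + D * m \<noteq> 0}. \<bar>real_of_int (a + D * m)\<bar> powr (-(1 + 2 * e))))
          \<longlongrightarrow> 1 / real_of_int \<bar>D\<bar>) (at_right 0)"
proof -
  obtain r1 where r1: "r1 > 0" and H1: "\<And>s. s > 1 \<Longrightarrow> \<exists>S. ((\<lambda>m. real_of_int (a + D * m) powr (-s)) has_sum S) {m. a + D * m > 0} \<and>
          r1 powr (1 - s) / (real_of_int \<bar>D\<bar> * (s - 1)) \<le> S \<and>
          S \<le> r1 powr (1 - s) / (real_of_int \<bar>D\<bar> * (s - 1)) + r1 powr (-s)"
    using pos_part[OF D, of a] by blast
  have D': "-D \<noteq> 0" using D by simp
  obtain r2 where r2: "r2 > 0" and H2: "\<And>s. s > 1 \<Longrightarrow> \<exists>S. ((\<lambda>m. real_of_int (-a + (-D) * m) powr (-s)) has_sum S) {m. -a + (-D) * m > 0} \<and>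
          r2 powr (1 - s) / (real_of_int \<bar>-D\<bar> * (s - 1)) \<le> S \<and>
          S \<le> r2 powr (1 - s) / (real_of_int \<bar>-D\<bar> * (s - 1)) + r2 powr (-s)"
    using pos_part[OF D', of "-a"] by blast
  define d where "d = real_of_int \<bar>D\<bar>"
  have d: "d > 0" using D by (simp add: d_def)
  have main: "\<exists>S. ((\<lambda>m. \<bar>real_of_int (a + D * m)\<bar> powr (-s)) has_sum S) {m. a + D * m \<noteq> 0} \<and>
          (r1 powr (1 - s) + r2 powr (1 - s)) / (d * (s - 1)) \<le> S \<and>
          S \<le> (r1 powr (1 - s) + r2 powr (1 - s)) / (d * (s - 1)) + r1 powr (-s) + r2 powr (-s)"
    if s: "s > 1" for s
  proof -
    obtain S1 where S1: "((\<lambda>m. real_of_int (a + D * m) powr (-s)) has_sum S1) {m. a + D * m > 0}"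
      "r1 powr (1 - s) / (d * (s - 1)) \<le> S1" "S1 \<le> r1 powr (1 - s) / (d * (s - 1)) + r1 powr (-s)"
      using H1[OF s] unfolding d_def by blast
    obtain S2 where S2: "((\<lambda>m. real_of_int (-a + (-D) * m) powr (-s)) has_sum S2) {m. -a + (-D) * m > 0}"
      "r2 powr (1 - s) / (d * (s - 1)) \<le> S2" "S2 \<le> r2 powr (1 - s) / (d * (s - 1)) + r2 powr (-s)"
      using H2[OF s] unfolding d_def by auto
    have S1': "((\<lambda>m. \<bar>real_of_int (a + D * m)\<bar> powr (-s)) has_sum S1) {m. a + D * m > 0}"
    proof (rule has_sum_cong[THEN iffD1, OF _ S1(1)])
      fix m assume "m \<in> {m. a + D * m > 0}"
      then have "real_of_int (a + D * m) > 0" by (simp only: mem_Collect_eq of_int_0_less_iff)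
      then show "real_of_int (a + D * m) powr (-s) = \<bar>real_of_int (a + D * m)\<bar> powr (-s)"
        by (simp only: abs_of_pos)
    qed
    have S2': "((\<lambda>m. \<bar>real_of_int (a + D * m)\<bar> powr (-s)) has_sum S2) {m. -a + (-D) * m > 0}"
    proof (rule has_sum_cong[THEN iffD1, OF _ S2(1)])
      fix m assume "m \<in> {m. -a + (-D) * m > 0}"
      then have "a + D * m < 0" by simp
      then have "real_of_int (a + D * m) < 0" by (simp only: of_int_less_0_iff)
      then have "\<bar>real_of_int (a + D * m)\<bar> = real_of_int (-a + (-D) * m)" by (simp add: abs_of_neg)
      then show "real_of_int (-a + (-D) * m) powr (-s) = \<bar>real_of_int (a + D * m)\<bar> powr (-s)"
        by simp
    qed
    have un: "{m. a + D * m \<noteq> 0} = {m. a + D * m > 0} \<union> {m. -a + (-D) * m > 0}" by auto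
    have "((\<lambda>m. \<bar>real_of_int (a + D * m)\<bar> powr (-s)) has_sum (S1 + S2)) {m. a + D * m \<noteq> 0}"
      unfolding un by (rule has_sum_Un_disjoint[OF S1' S2']) auto
    moreover have "(r1 powr (1 - s) + r2 powr (1 - s)) / (d * (s - 1)) = r1 powr (1 - s) / (d * (s - 1)) + r2 powr (1 - s) / (d * (s - 1))"
      by (simp add: add_divide_distrib)
    ultimately show ?thesis using S1(2,3) S2(2,3) by (intro exI[of _ "S1 + S2"]) auto
  qed
  show "\<And>s. s > 1 \<Longrightarrow> (\<lambda>m. \<bar>real_of_int (a + D * m)\<bar> powr (-s)) summable_on {m. a + D * m \<noteq> 0}"
    using main has_sum_imp_summable by blast
  define Z where "Z e = (\<Sum>\<^sub>\<infinity>m\<in>{m. a + D * m \<noteq> 0}. \<bar>real_of_int (a + D * m)\<bar> powr (-(1 + 2 * e)))" for e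
  define lo where "lo e = (r1 powr (- 2 * e) + r2 powr (- 2 * e)) / (2 * d)" for e :: real
  define hi where "hi e = lo e + e * (r1 powr (-(1 + 2 * e)) + r2 powr (-(1 + 2 * e)))" for e :: real
  have bnds: "lo e \<le> e * Z e \<and> e * Z e \<le> hi e" if e: "e > 0" for e
  proof -
    have s: "1 + 2 * e > 1" using e by simp
    obtain S where S: "((\<lambda>m. \<bar>real_of_int (a + D * m)\<bar> powr (-(1 + 2 * e))) has_sum S) {m. a + D * m \<noteq> 0}"
      "(r1 powr (1 - (1 + 2 * e)) + r2 powr (1 - (1 + 2 * e))) / (d * (1 + 2 * e - 1)) \<le> S"
      "S \<le> (r1 powr (1 - (1 + 2 * e)) + r2 powr (1 - (1 + 2 * e))) / (d * (1 + 2 * e - 1)) + r1 powr (-(1 + 2 * e)) + r2 powr (-(1 + 2 * e))"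
      using main[OF s] by blast
    have ZS: "Z e = S" unfolding Z_def using S(1) by (rule infsumI)
    have eq: "e * ((r1 powr (1 - (1 + 2 * e)) + r2 powr (1 - (1 + 2 * e))) / (d * (1 + 2 * e - 1))) = lo e"
      unfolding lo_def using e d by (simp add: field_simps)
    have "e * ((r1 powr (1 - (1 + 2 * e)) + r2 powr (1 - (1 + 2 * e))) / (d * (1 + 2 * e - 1))) \<le> e * S"
      using S(2) e by (intro mult_left_mono) auto
    moreover have "e * S \<le> e * ((r1 powr (1 - (1 + 2 * e)) + r2 powr (1 - (1 + 2 * e))) / (d * (1 + 2 * e - 1)) + r1 powr (-(1 + 2 * e)) + r2 powr (-(1 + 2 * e)))"
      using S(3) e by (intro mult_left_mono) auto
    ultimately show ?thesis unfolding ZS hi_def eq[symmetric] by (simp add: algebra_simps)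
  qed
  have llo: "(lo \<longlongrightarrow> 1 / d) (at_right 0)"
  proof -
    have "((\<lambda>e. (r1 powr (- 2 * e) + r2 powr (- 2 * e)) / (2 * d)) \<longlongrightarrow> (r1 powr (- 2 * 0) + r2 powr (- 2 * 0)) / (2 * d)) (at_right 0)"
      using r1 r2 d by (intro tendsto_intros) auto
    then show ?thesis using r1 r2 d unfolding lo_def by simp
  qed
  have lhi: "(hi \<longlongrightarrow> 1 / d) (at_right 0)"
  proof -
    have "((\<lambda>e. lo e + e * (r1 powr (-(1 + 2 * e)) + r2 powr (-(1 + 2 * e)))) \<longlongrightarrow> 1 / d + 0 * (r1 powr (-(1 + 2 * 0)) + r2 powr (-(1 + 2 * 0)))) (at_right 0)"
      using r1 r2 d llo by (intro tendsto_intros) auto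
    then show ?thesis unfolding hi_def by simp
  qed
  have ev: "\<forall>\<^sub>F e in at_right 0. lo e \<le> e * Z e" "\<forall>\<^sub>F e in at_right 0. e * Z e \<le> hi e"
    using bnds by (auto simp: eventually_at_right_less intro: eventually_mono[OF eventually_at_right_less[of 0]])
  have "((\<lambda>e. e * Z e) \<longlongrightarrow> 1 / d) (at_right 0)"
    by (rule tendsto_sandwich[OF ev llo lhi])
  then show "((\<lambda>e. e * (\<Sum>\<^sub>\<infinity>m\<in>{m. a + D * m \<noteq> 0}. \<bar>real_of_int (a + D * m)\<bar> powr (-(1 + 2 * e))))
          \<longlongrightarrow> 1 / real_of_int \<bar>D\<bar>) (at_right 0)"
    unfolding Z_def d_def .
qed

lemma inv_sq_int: "integrable lborel (\<lambda>x::real. inverse (1 + x^2))"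
  and inv_sq_val: "(LBINT x::real. inverse (1 + x^2)) = pi"
proof -
  have e: "einterval (-\<infinity>) \<infinity> = (UNIV :: real set)" by (auto simp: einterval_def)
  show "integrable lborel (\<lambda>x::real. inverse (1 + x^2))"
    using integrable_inverse_1_plus_square unfolding e set_integrable_def by simp
  show "(LBINT x::real. inverse (1 + x^2)) = pi"
    using LBINT_inverse_1_plus_square
    unfolding interval_lebesgue_integral_def e set_lebesgue_integral_def by simp
qed

lemma invN_int:
  fixes Y :: real assumes Y: "Y \<noteq> 0"
  shows "integrable lborel (\<lambda>t. 1 / (t^2 + Y^2))"
    and "(LBINT t. 1 / (t^2 + Y^2)) = pi / \<bar>Y\<bar>"
proof -
  have eq: "1 / ((0 + Y * x)^2 + Y^2) = (1 / Y^2) * inverse (1 + x^2)" for x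
    using Y by (simp add: field_simps power_mult_distrib)
  have "integrable lborel (\<lambda>x. (1 / Y^2) * inverse (1 + x^2))"
    using inv_sq_int by simp
  then have "integrable lborel (\<lambda>x. (\<lambda>t. 1 / (t^2 + Y^2)) (0 + Y * x))"
    unfolding eq .
  then show I: "integrable lborel (\<lambda>t. 1 / (t^2 + Y^2))"
    using lborel_integrable_real_affine_iff[OF Y, of "\<lambda>t. 1 / (t^2 + Y^2)" 0] by simp
  have "(LBINT t. 1 / (t^2 + Y^2)) = \<bar>Y\<bar> *\<^sub>R (LBINT x. (\<lambda>t. 1 / (t^2 + Y^2)) (0 + Y * x))"
    by (rule lborel_integral_real_affine[OF Y])
  also have "\<dots> = \<bar>Y\<bar> * ((1 / Y^2) * pi)"
    unfolding eq using inv_sq_val by simp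
  also have "\<dots> = pi / \<bar>Y\<bar>"
    using Y by (simp add: field_simps power2_eq_square abs_mult_self_eq)
  finally show "(LBINT t. 1 / (t^2 + Y^2)) = pi / \<bar>Y\<bar>" .
qed

lemma integral_deriv_zero:
  fixes H h :: "real \<Rightarrow> complex"
  assumes deriv: "\<And>t. (H has_vector_derivative h t) (at t)"
    and cont: "continuous_on UNIV h" and int: "integrable lborel h"
    and top: "(H \<longlongrightarrow> 0) at_top" and bot: "(H \<longlongrightarrow> 0) at_bot"
  shows "(LBINT t. h t) = 0"
proof -
  have ftc: "(LBINT t. indicator {-R..R} t *\<^sub>R h t) = H R - H (-R)" if "R \<ge> 0" for R
    using that by (intro integral_FTC_atLeastAtMost)
      (auto intro: has_vector_derivative_at_within deriv continuous_on_subset[OF cont])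
  have lim1: "((\<lambda>R. LBINT t. indicator {-R..R} t *\<^sub>R h t) \<longlongrightarrow> (LBINT t. h t)) at_top"
  proof (rule integral_dominated_convergence_at_top[where w="\<lambda>t. norm (h t)"])
    show "h \<in> borel_measurable lborel" using int by auto
    show "(\<lambda>t. indicator {-R..R} t *\<^sub>R h t) \<in> borel_measurable lborel" for R
      using int by (intro borel_measurable_integrable integrable_mult_indicator) auto
    show "integrable lborel (\<lambda>t. norm (h t))" using int by auto
    show "AE x in lborel. ((\<lambda>R. indicator {-R..R} x *\<^sub>R h x) \<longlongrightarrow> h x) at_top"
    proof (rule AE_I2)
      fix x :: real
      have "\<forall>\<^sub>F R in at_top. indicator {-R..R} x *\<^sub>R h x = h x"
        using eventually_ge_at_top[of "\<bar>x\<bar>"] by eventually_elim (auto simp: indicator_def)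
      then show "((\<lambda>R. indicator {-R..R} x *\<^sub>R h x) \<longlongrightarrow> h x) at_top"
        by (rule tendsto_eventually)
    qed
    show "\<forall>\<^sub>F R in at_top. AE x in lborel. norm (indicator {-R..R} x *\<^sub>R h x) \<le> norm (h x)"
      by (intro always_eventually allI AE_I2) (auto simp: indicator_def)
  qed
  have lim2: "((\<lambda>R. H R - H (-R)) \<longlongrightarrow> 0 - 0) at_top"
    by (intro tendsto_diff top filterlim_compose[OF bot filterlim_uminus_at_bot_at_top])
  have "((\<lambda>R. LBINT t. indicator {-R..R} t *\<^sub>R h t) \<longlongrightarrow> 0) at_top"
  proof (rule Lim_transform_eventually[OF lim2[simplified]])
    show "\<forall>\<^sub>F R in at_top. H R - H (-R) = (LBINT t. indicator {-R..R} t *\<^sub>R h t)"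
      using eventually_ge_at_top[of 0] by eventually_elim (simp add: ftc)
  qed
  then show ?thesis using tendsto_unique[OF _ lim1] by auto
qed

definition NN :: "real \<Rightarrow> real \<Rightarrow> real" where "NN Y t = t^2 + Y^2"
definition EE :: "real \<Rightarrow> real \<Rightarrow> real \<Rightarrow> real" where "EE e Y t = NN Y t powr (-e)"
definition pR :: "real \<Rightarrow> real \<Rightarrow> real \<Rightarrow> real" where
  "pR e Y t = (t^2 - Y^2) * EE e Y t / (NN Y t)^2"
definition pI :: "real \<Rightarrow> real \<Rightarrow> real \<Rightarrow> real" where
  "pI e Y t = - 2 * t * Y * EE e Y t / (NN Y t)^2"
definition dR :: "real \<Rightarrow> real \<Rightarrow> real \<Rightarrow> real" where
  "dR e Y t = 2 * t * EE e Y t / (NN Y t)^2 - 2 * e * t * (t^2 - Y^2) * EE e Y t / (NN Y t)^3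
             - 4 * t * (t^2 - Y^2) * EE e Y t / (NN Y t)^3"
definition dI :: "real \<Rightarrow> real \<Rightarrow> real \<Rightarrow> real" where
  "dI e Y t = - 2 * Y * EE e Y t / (NN Y t)^2 + 4 * e * t^2 * Y * EE e Y t / (NN Y t)^3
             + 8 * t^2 * Y * EE e Y t / (NN Y t)^3"
definition phi :: "real \<Rightarrow> real \<Rightarrow> real \<Rightarrow> complex" where
  "phi e Y t = of_real (pR e Y t) + \<i> * of_real (pI e Y t)"
definition dphi :: "real \<Rightarrow> real \<Rightarrow> real \<Rightarrow> complex" where
  "dphi e Y t = of_real (dR e Y t) + \<i> * of_real (dI e Y t)"

lemma NN_pos: "Y \<noteq> 0 \<Longrightarrow> NN Y t > 0"
  unfolding NN_def by (simp add: add_nonneg_pos)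

lemma dNN: "(NN Y has_real_derivative 2 * t) (at t)"
  unfolding NN_def[abs_def] by (auto intro!: derivative_eq_intros)

lemma dEE: assumes Y: "Y \<noteq> 0"
  shows "(EE e Y has_real_derivative (- e * 2 * t * EE e Y t / NN Y t)) (at t)"
proof -
  have "((\<lambda>t. NN Y t powr (-e)) has_real_derivative (-e) * NN Y t powr (-e - 1) * (2 * t)) (at t)"
    by (rule DERIV_fun_powr[OF dNN NN_pos[OF Y], simplified])
  moreover have "(-e) * NN Y t powr (-e - 1) * (2 * t) = - e * 2 * t * EE e Y t / NN Y t"
    using NN_pos[OF Y, of t] by (simp add: EE_def powr_diff)
  ultimately show ?thesis unfolding EE_def[abs_def] by metis
qed

lemma dpR: assumes Y: "Y \<noteq> 0"
  shows "(pR e Y has_real_derivative dR e Y t) (at t)"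
proof -
  have N: "NN Y t \<noteq> 0" using NN_pos[OF Y] by (metis less_irrefl)
  have "((\<lambda>t. (t^2 - Y^2) * EE e Y t / (NN Y t)^2) has_real_derivative
     ((2 * t) * EE e Y t + (t^2 - Y^2) * (- e * 2 * t * EE e Y t / NN Y t)) / (NN Y t)^2
      - (t^2 - Y^2) * EE e Y t * (2 * NN Y t * (2 * t)) / ((NN Y t)^2)^2) (at t)"
    using N by (auto intro!: derivative_eq_intros dEE[OF Y] dNN simp: field_simps power2_eq_square)
  moreover have "((2 * t) * EE e Y t + (t^2 - Y^2) * (- e * 2 * t * EE e Y t / NN Y t)) / (NN Y t)^2
      - (t^2 - Y^2) * EE e Y t * (2 * NN Y t * (2 * t)) / ((NN Y t)^2)^2 = dR e Y t"
    using N unfolding dR_def by (simp add: field_simps power2_eq_square power3_eq_cube)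
  ultimately show ?thesis unfolding pR_def[abs_def] by metis
qed

lemma dpI: assumes Y: "Y \<noteq> 0"
  shows "(pI e Y has_real_derivative dI e Y t) (at t)"
proof -
  have N: "NN Y t \<noteq> 0" using NN_pos[OF Y] by (metis less_irrefl)
  have "((\<lambda>t. - 2 * t * Y * EE e Y t / (NN Y t)^2) has_real_derivative
     ((- 2 * Y) * EE e Y t + (- 2 * t * Y) * (- e * 2 * t * EE e Y t / NN Y t)) / (NN Y t)^2
      - (- 2 * t * Y) * EE e Y t * (2 * NN Y t * (2 * t)) / ((NN Y t)^2)^2) (at t)"
    using N by (auto intro!: derivative_eq_intros dEE[OF Y] dNN simp: field_simps power2_eq_square)
  moreover have "((- 2 * Y) * EE e Y t + (- 2 * t * Y) * (- e * 2 * t * EE e Y t / NN Y t)) / (NN Y t)^2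
      - (- 2 * t * Y) * EE e Y t * (2 * NN Y t * (2 * t)) / ((NN Y t)^2)^2 = dI e Y t"
    using N unfolding dI_def by (simp add: field_simps power2_eq_square power3_eq_cube)
  ultimately show ?thesis unfolding pI_def[abs_def] by metis
qed

lemma dphi_deriv: assumes Y: "Y \<noteq> 0"
  shows "(phi e Y has_vector_derivative dphi e Y t) (at t)"
  unfolding phi_def[abs_def] dphi_def
  by (auto intro!: derivative_eq_intros dpR[OF Y] dpI[OF Y])

lemma EE_cont: assumes Y: "Y \<noteq> 0" shows "continuous_on UNIV (EE e Y)"
  using NN_pos[OF Y] unfolding EE_def[abs_def] NN_def
  by (intro continuous_intros) (auto simp: add_nonneg_pos)

lemma dphi_cont: assumes Y: "Y \<noteq> 0" shows "continuous_on UNIV (dphi e Y)"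
proof -
  have N: "NN Y t \<noteq> 0" for t using NN_pos[OF Y] by (metis less_irrefl)
  have c: "continuous_on UNIV (NN Y)" unfolding NN_def[abs_def] by (intro continuous_intros)
  show ?thesis
    unfolding dphi_def[abs_def] dR_def dI_def
    using N by (intro continuous_intros EE_cont[OF Y] c) auto
qed

lemma phi_cont: assumes Y: "Y \<noteq> 0" shows "continuous_on UNIV (phi e Y)"
  by (rule continuous_on_vector_derivative) (auto intro: has_vector_derivative_at_within dphi_deriv[OF Y])

lemma phi_mult: assumes Y: "Y \<noteq> 0"
  shows "phi e Y t * (Complex t Y)^2 = of_real (EE e Y t)"
proof -
  have N: "NN Y t \<noteq> 0" using NN_pos[OF Y] by (metis less_irrefl)
  have NN2: "(NN Y t)^2 = (t^2 - Y^2)^2 + (2 * t * Y)^2" unfolding NN_def by (simp add: power2_eq_square algebra_simps)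
  show ?thesis
  proof (rule complex_eqI)
    have "Re (phi e Y t * (Complex t Y)^2) = pR e Y t * (t^2 - Y^2) - pI e Y t * (2 * t * Y)"
      by (simp add: phi_def power2_eq_square)
    also have "\<dots> = EE e Y t * ((t^2 - Y^2)^2 + (2 * t * Y)^2) / (NN Y t)^2"
      unfolding pR_def pI_def using N by (simp add: field_simps power2_eq_square)
    also have "\<dots> = EE e Y t" unfolding NN2[symmetric] using N by simp
    finally show "Re (phi e Y t * (Complex t Y)^2) = Re (of_real (EE e Y t))" by simp
    show "Im (phi e Y t * (Complex t Y)^2) = Im (of_real (EE e Y t))"
      using N by (simp add: phi_def pR_def pI_def power2_eq_square field_simps)
  qed
qed

lemma cmod_powr: "cmod (Complex t Y) powr (2 * e) = NN Y t powr e"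
proof -
  have "cmod (Complex t Y) = NN Y t powr (1/2)"
    by (simp add: complex_norm NN_def powr_half_sqrt)
  then show ?thesis by (simp add: powr_powr)
qed

lemma term_phi: assumes Y: "Y \<noteq> 0"
  shows "1 / ((Complex t Y)^2 * complex_of_real (cmod (Complex t Y) powr (2 * e))) = phi e Y t"
proof -
  have Np: "NN Y t > 0" using NN_pos[OF Y] .
  define A where "A = (Complex t Y)^2 * complex_of_real (NN Y t powr e)"
  have w: "Complex t Y \<noteq> 0" using Y by (simp add: complex_eq_iff)
  have A: "A \<noteq> 0" unfolding A_def using w Np by simp
  have "phi e Y t * A = of_real (EE e Y t * NN Y t powr e)"
    unfolding A_def using phi_mult[OF Y, of e t] by (simp add: mult.assoc[symmetric])
  also have "EE e Y t * NN Y t powr e = 1"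
    using Np by (simp add: EE_def powr_add[symmetric])
  finally have "phi e Y t * A = 1" by simp
  then have "1 / A = phi e Y t" using A by (metis nonzero_mult_div_cancel_right)
  then show ?thesis unfolding A_def cmod_powr .
qed

lemma norm_phi: assumes Y: "Y \<noteq> 0"
  shows "norm (phi e Y t) = EE e Y t / NN Y t"
proof -
  have Np: "NN Y t > 0" using NN_pos[OF Y] .
  have "norm (phi e Y t) = 1 / ((cmod (Complex t Y))^2 * NN Y t powr e)"
    unfolding term_phi[OF Y, symmetric, of e t] cmod_powr
    by (simp add: norm_divide norm_mult norm_power)
  also have "(cmod (Complex t Y))^2 = NN Y t" by (simp add: complex_norm NN_def)
  finally show ?thesis using Np by (simp add: EE_def powr_minus divide_inverse)
qed

lemma EE_le: assumes Y: "Y \<noteq> 0" and e: "e \<ge> 0"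
  shows "EE e Y t \<le> (Y^2) powr (-e)"
  unfolding EE_def using Y e by (intro powr_mono2') (auto simp: NN_def)

lemma EE_nonneg: "EE e Y t \<ge> 0" by (simp add: EE_def)

lemma phi_bound: assumes Y: "Y \<noteq> 0" and e: "e \<ge> 0"
  shows "norm (phi e Y t) \<le> (Y^2) powr (-e) / NN Y t"
  unfolding norm_phi[OF Y] using EE_le[OF Y e] NN_pos[OF Y, of t] by (simp add: divide_right_mono)

lemma NN_facts:
  shows "\<bar>t\<bar> * \<bar>Y\<bar> \<le> NN Y t" and "\<bar>t^2 - Y^2\<bar> \<le> NN Y t" and "t^2 \<le> NN Y t" and "Y^2 \<le> NN Y t"
proof -
  have "0 \<le> (\<bar>t\<bar> - \<bar>Y\<bar>)^2" by simp
  moreover have "(\<bar>t\<bar> - \<bar>Y\<bar>)^2 = t^2 + Y^2 - 2 * (\<bar>t\<bar> * \<bar>Y\<bar>)"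
    by (simp add: power2_eq_square algebra_simps)
  moreover have "0 \<le> \<bar>t\<bar> * \<bar>Y\<bar>" by simp
  ultimately show "\<bar>t\<bar> * \<bar>Y\<bar> \<le> NN Y t" unfolding NN_def by linarith
  have "t^2 \<ge> 0" "Y^2 \<ge> 0" by auto
  then show "\<bar>t^2 - Y^2\<bar> \<le> NN Y t" "t^2 \<le> NN Y t" "Y^2 \<le> NN Y t" unfolding NN_def abs_le_iff by linarith+
qed

lemma dR_bound: assumes Y: "Y \<noteq> 0" and e: "0 \<le> e" "e \<le> 1"
  shows "\<bar>dR e Y t\<bar> \<le> 8 * EE e Y t / (\<bar>Y\<bar> * NN Y t)"
proof -
  define N where "N = NN Y t"
  define E where "E = EE e Y t"
  have Np: "N > 0" unfolding N_def using NN_pos[OF Y] .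
  have E0: "E \<ge> 0" unfolding E_def by (rule EE_nonneg)
  have eq: "dR e Y t = E * t * (2 * N - (2 * e + 4) * (t^2 - Y^2)) / N^3"
    unfolding dR_def E_def N_def using Np[unfolded N_def]
    by (simp add: field_simps power2_eq_square power3_eq_cube)
  have P: "\<bar>2 * N - (2 * e + 4) * (t^2 - Y^2)\<bar> \<le> 8 * N"
  proof -
    have "\<bar>(2 * e + 4) * (t^2 - Y^2)\<bar> \<le> 6 * N"
      using NN_facts(2)[of t Y] e unfolding N_def abs_mult
      by (intro mult_mono) auto
    then show ?thesis using Np by linarith
  qed
  have "\<bar>dR e Y t\<bar> = E * \<bar>t\<bar> * \<bar>2 * N - (2 * e + 4) * (t^2 - Y^2)\<bar> / N^3"
    unfolding eq using E0 Np by (simp add: abs_mult abs_divide)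
  also have "\<dots> \<le> E * \<bar>t\<bar> * (8 * N) / N^3"
    using P E0 Np by (intro divide_right_mono mult_left_mono) auto
  also have "\<dots> = 8 * E * (\<bar>t\<bar> * \<bar>Y\<bar>) / (\<bar>Y\<bar> * N^2)"
    using Np Y by (simp add: field_simps power2_eq_square power3_eq_cube)
  also have "\<dots> \<le> 8 * E * N / (\<bar>Y\<bar> * N^2)"
    using NN_facts(1)[of t Y] E0 Np Y unfolding N_def
    by (intro divide_right_mono mult_left_mono) auto
  also have "\<dots> = 8 * E / (\<bar>Y\<bar> * N)"
    using Np Y by (simp add: field_simps power2_eq_square)
  finally show ?thesis unfolding E_def N_def .
qed

lemma dI_bound: assumes Y: "Y \<noteq> 0" and e: "0 \<le> e" "e \<le> 1"
  shows "\<bar>dI e Y t\<bar> \<le> 14 * EE e Y t / (\<bar>Y\<bar> * NN Y t)"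
proof -
  define N where "N = NN Y t"
  define E where "E = EE e Y t"
  have Np: "N > 0" unfolding N_def using NN_pos[OF Y] .
  have E0: "E \<ge> 0" unfolding E_def by (rule EE_nonneg)
  have eq: "dI e Y t = E * Y * (- 2 * N + (4 * e + 8) * t^2) / N^3"
    unfolding dI_def E_def N_def using Np[unfolded N_def]
    by (simp add: field_simps power2_eq_square power3_eq_cube)
  have P: "\<bar>- 2 * N + (4 * e + 8) * t^2\<bar> \<le> 14 * N"
  proof -
    have "\<bar>(4 * e + 8) * t^2\<bar> \<le> 12 * N"
      using NN_facts(3)[of t Y] e unfolding N_def abs_mult
      by (intro mult_mono) auto
    then show ?thesis using Np by linarith
  qed
  have "\<bar>dI e Y t\<bar> = E * \<bar>Y\<bar> * \<bar>- 2 * N + (4 * e + 8) * t^2\<bar> / N^3"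
    unfolding eq using E0 Np by (simp add: abs_mult abs_divide)
  also have "\<dots> \<le> E * \<bar>Y\<bar> * (14 * N) / N^3"
    using P E0 Np by (intro divide_right_mono mult_left_mono) auto
  also have "\<dots> = 14 * E * (\<bar>Y\<bar> * \<bar>Y\<bar>) / (\<bar>Y\<bar> * N^2)"
    using Np Y by (simp add: field_simps power2_eq_square power3_eq_cube)
  also have "\<dots> \<le> 14 * E * N / (\<bar>Y\<bar> * N^2)"
    using NN_facts(4)[of Y t] E0 Np Y unfolding N_def abs_mult_self_eq power2_eq_square
    by (intro divide_right_mono mult_left_mono) auto
  also have "\<dots> = 14 * E / (\<bar>Y\<bar> * N)"
    using Np Y by (simp add: field_simps power2_eq_square)
  finally show ?thesis unfolding E_def N_def .
qed

lemma dphi_bound: assumes Y: "Y \<noteq> 0" and e: "0 \<le> e" "e \<le> 1"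
  shows "norm (dphi e Y t) \<le> 22 * (Y^2) powr (-e) / (\<bar>Y\<bar> * NN Y t)"
proof -
  have "norm (dphi e Y t) \<le> \<bar>dR e Y t\<bar> + \<bar>dI e Y t\<bar>"
    unfolding dphi_def using norm_triangle_ineq[of "of_real (dR e Y t)" "\<i> * of_real (dI e Y t)"]
    by (simp add: norm_mult)
  also have "\<dots> \<le> 22 * EE e Y t / (\<bar>Y\<bar> * NN Y t)"
  proof -
    have s: "8 * X / Z + 14 * X / Z = 22 * X / Z" for X Z :: real by (simp add: field_simps)
    show ?thesis using dR_bound[OF Y e, of t] dI_bound[OF Y e, of t] s[of "EE e Y t" "\<bar>Y\<bar> * NN Y t"] by linarith
  qed
  also have "\<dots> \<le> 22 * (Y^2) powr (-e) / (\<bar>Y\<bar> * NN Y t)"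
    using EE_le[OF Y e(1)] NN_pos[OF Y, of t] Y by (intro divide_right_mono) auto
  finally show ?thesis .
qed

lemma meas_cont: "continuous_on UNIV f \<Longrightarrow> (f :: real \<Rightarrow> 'a::{topological_space, second_countable_topology}) \<in> borel_measurable lborel"
  by (simp add: borel_measurable_continuous_onI)

lemma phi_integrable: assumes Y: "Y \<noteq> 0" and e: "e \<ge> 0"
  shows "integrable lborel (phi e Y)"
proof (rule Bochner_Integration.integrable_bound)
  show "integrable lborel (\<lambda>t. (Y^2) powr (-e) * (1 / (t^2 + Y^2)))"
    by (rule integrable_mult_right[OF invN_int(1)[OF Y]])
  show "phi e Y \<in> borel_measurable lborel" by (rule meas_cont[OF phi_cont[OF Y]])
  show "AE t in lborel. norm (phi e Y t) \<le> norm ((Y^2) powr (-e) * (1 / (t^2 + Y^2)))"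
    using phi_bound[OF Y e] by (intro AE_I2) (simp add: NN_def)
qed

lemma dphi_integrable: assumes Y: "Y \<noteq> 0" and e: "0 \<le> e" "e \<le> 1"
  shows "integrable lborel (dphi e Y)"
proof (rule Bochner_Integration.integrable_bound)
  show "integrable lborel (\<lambda>t. (22 * (Y^2) powr (-e) / \<bar>Y\<bar>) * (1 / (t^2 + Y^2)))"
    by (rule integrable_mult_right[OF invN_int(1)[OF Y]])
  show "dphi e Y \<in> borel_measurable lborel" by (rule meas_cont[OF dphi_cont[OF Y]])
  show "AE t in lborel. norm (dphi e Y t) \<le> norm ((22 * (Y^2) powr (-e) / \<bar>Y\<bar>) * (1 / (t^2 + Y^2)))"
    using dphi_bound[OF Y e] by (intro AE_I2) (simp add: NN_def)
qed

lemma int_norm_phi: assumes Y: "Y \<noteq> 0" and e: "e \<ge> 0"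
  shows "(LBINT t. norm (phi e Y t)) \<le> (Y^2) powr (-e) * pi / \<bar>Y\<bar>"
proof -
  have "(LBINT t. norm (phi e Y t)) \<le> (LBINT t. (Y^2) powr (-e) * (1 / (t^2 + Y^2)))"
    by (rule integral_mono[OF integrable_norm[OF phi_integrable[OF Y e]] integrable_mult_right[OF invN_int(1)[OF Y]]])
       (use phi_bound[OF Y e] in \<open>simp add: NN_def\<close>)
  also have "\<dots> = (Y^2) powr (-e) * (LBINT t. 1 / (t^2 + Y^2))" by (rule integral_mult_right_zero)
  also have "\<dots> = (Y^2) powr (-e) * pi / \<bar>Y\<bar>" unfolding invN_int(2)[OF Y] by simp
  finally show ?thesis .
qed

lemma int_norm_dphi: assumes Y: "Y \<noteq> 0" and e: "0 \<le> e" "e \<le> 1"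
  shows "(LBINT t. norm (dphi e Y t)) \<le> 22 * pi * (Y^2) powr (-e) / Y^2"
proof -
  have "(LBINT t. norm (dphi e Y t)) \<le> (LBINT t. (22 * (Y^2) powr (-e) / \<bar>Y\<bar>) * (1 / (t^2 + Y^2)))"
    by (rule integral_mono[OF integrable_norm[OF dphi_integrable[OF Y e]] integrable_mult_right[OF invN_int(1)[OF Y]]])
       (use dphi_bound[OF Y e] in \<open>simp add: NN_def\<close>)
  also have "\<dots> = (22 * (Y^2) powr (-e) / \<bar>Y\<bar>) * (LBINT t. 1 / (t^2 + Y^2))" by (rule integral_mult_right_zero)
  also have "\<dots> = (22 * (Y^2) powr (-e) / \<bar>Y\<bar>) * (pi / \<bar>Y\<bar>)" unfolding invN_int(2)[OF Y] ..
  also have "\<dots> = 22 * pi * (Y^2) powr (-e) / Y^2"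
    by (simp add: field_simps abs_mult_self_eq power2_eq_square)
  finally show ?thesis .
qed

definition qq :: "real \<Rightarrow> real \<Rightarrow> real \<Rightarrow> real" where
  "qq e Y t = t^2 * EE e Y t / (NN Y t)^2"

lemma qq_bound: assumes Y: "Y \<noteq> 0" and e: "e \<ge> 0"
  shows "qq e Y t \<le> (Y^2) powr (-e) / NN Y t" and "qq e Y t \<ge> 0"
proof -
  have Np: "NN Y t > 0" using NN_pos[OF Y] .
  have "qq e Y t = EE e Y t * (t^2 / NN Y t) / NN Y t"
    unfolding qq_def by (simp add: power2_eq_square)
  also have "\<dots> \<le> EE e Y t * 1 / NN Y t"
    using Np NN_facts(3)[of t Y] EE_nonneg[of e Y t]
    by (intro divide_right_mono mult_left_mono) auto
  also have "\<dots> \<le> (Y^2) powr (-e) / NN Y t"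
    using EE_le[OF Y e, of t] Np by (simp add: divide_right_mono)
  finally show "qq e Y t \<le> (Y^2) powr (-e) / NN Y t" .
  show "qq e Y t \<ge> 0" unfolding qq_def using EE_nonneg[of e Y t] by simp
qed

lemma qq_cont: assumes Y: "Y \<noteq> 0" shows "continuous_on UNIV (qq e Y)"
proof -
  have N: "NN Y t \<noteq> 0" for t using NN_pos[OF Y] by (metis less_irrefl)
  have c: "continuous_on UNIV (NN Y)" unfolding NN_def[abs_def] by (intro continuous_intros)
  show ?thesis unfolding qq_def[abs_def] using N by (intro continuous_intros EE_cont[OF Y] c) auto
qed

lemma qq_integrable: assumes Y: "Y \<noteq> 0" and e: "e \<ge> 0"
  shows "integrable lborel (qq e Y)"
proof (rule Bochner_Integration.integrable_bound)
  show "integrable lborel (\<lambda>t. (Y^2) powr (-e) * (1 / (t^2 + Y^2)))"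
    by (rule integrable_mult_right[OF invN_int(1)[OF Y]])
  show "qq e Y \<in> borel_measurable lborel" by (rule meas_cont[OF qq_cont[OF Y]])
  show "AE t in lborel. norm (qq e Y t) \<le> norm ((Y^2) powr (-e) * (1 / (t^2 + Y^2)))"
    using qq_bound[OF Y e] by (intro AE_I2) (simp add: NN_def)
qed

lemma abs_decay: "((\<lambda>t::real. c / \<bar>t\<bar>) \<longlongrightarrow> 0) at_top" "((\<lambda>t::real. c / \<bar>t\<bar>) \<longlongrightarrow> 0) at_bot"
proof -
  show "((\<lambda>t::real. c / \<bar>t\<bar>) \<longlongrightarrow> 0) at_top"
    by (rule tendsto_divide_0[OF tendsto_const filterlim_at_top_imp_at_infinity[OF filterlim_abs_real]])
  have "filterlim (\<lambda>t::real. \<bar>t\<bar>) at_top at_bot"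
    unfolding filterlim_at_bot_mirror using filterlim_abs_real by simp
  then show "((\<lambda>t::real. c / \<bar>t\<bar>) \<longlongrightarrow> 0) at_bot"
    by (rule tendsto_divide_0[OF tendsto_const filterlim_at_top_imp_at_infinity])
qed

lemma norm_cplx_le: "norm (complex_of_real a + \<i> * complex_of_real b) \<le> \<bar>a\<bar> + \<bar>b\<bar>"
  using cmod_le[of "complex_of_real a + \<i> * complex_of_real b"] by simp

lemma int_phi: assumes Y: "Y \<noteq> 0" and e: "e \<ge> 0"
  shows "(LBINT t. phi e Y t) = of_real (- 2 * e * (LBINT t. qq e Y t))"
proof -
  define H where "H t = of_real (- t * EE e Y t / NN Y t) + \<i> * of_real (Y * EE e Y t / NN Y t / (1 + e))" for t
  define h where "h t = phi e Y t + of_real (2 * e * qq e Y t)" for t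
  have d1: "((\<lambda>t. - t * EE e Y t / NN Y t) has_real_derivative (pR e Y t + 2 * e * qq e Y t)) (at t)" for t
  proof -
    have N: "NN Y t \<noteq> 0" using NN_pos[OF Y] by (metis less_irrefl)
    have D: "((\<lambda>t. - t * EE e Y t / NN Y t) has_real_derivative
       ((- 1) * EE e Y t + (- t) * (- e * 2 * t * EE e Y t / NN Y t)) / NN Y t
        - (- t) * EE e Y t * (2 * t) / (NN Y t)^2) (at t)"
      using N by (auto intro!: derivative_eq_intros dEE[OF Y] dNN simp: field_simps power2_eq_square)
    have A: "((- 1) * EE e Y t + (- t) * (- e * 2 * t * EE e Y t / NN Y t)) / NN Y t
        - (- t) * EE e Y t * (2 * t) / (NN Y t)^2
        = (2 * t^2 - NN Y t) * EE e Y t / (NN Y t)^2 + 2 * e * (t^2 * EE e Y t / (NN Y t)^2)"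
      using N by (simp add: field_simps power2_eq_square)
    have B: "2 * t^2 - NN Y t = t^2 - Y^2" by (simp add: NN_def)
    have "((- 1) * EE e Y t + (- t) * (- e * 2 * t * EE e Y t / NN Y t)) / NN Y t
        - (- t) * EE e Y t * (2 * t) / (NN Y t)^2 = pR e Y t + 2 * e * qq e Y t"
      unfolding A B pR_def qq_def ..
    then show ?thesis using D by metis
  qed
  have d2a: "((\<lambda>t. Y * EE e Y t / NN Y t) has_real_derivative (1 + e) * pI e Y t) (at t)" for t
  proof -
    have N: "NN Y t \<noteq> 0" using NN_pos[OF Y] by (metis less_irrefl)
    have D: "((\<lambda>t. Y * EE e Y t / NN Y t) has_real_derivative
       (Y * (- e * 2 * t * EE e Y t / NN Y t)) / NN Y t
        - Y * EE e Y t * (2 * t) / (NN Y t)^2) (at t)"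
      using N by (auto intro!: derivative_eq_intros dEE[OF Y] dNN simp: field_simps power2_eq_square)
    have "(Y * (- e * 2 * t * EE e Y t / NN Y t)) / NN Y t
        - Y * EE e Y t * (2 * t) / (NN Y t)^2 = (1 + e) * pI e Y t"
      using N unfolding pI_def by (simp add: field_simps power2_eq_square)
    then show ?thesis using D by metis
  qed
  have d2: "((\<lambda>t. Y * EE e Y t / NN Y t / (1 + e)) has_real_derivative pI e Y t) (at t)" for t
  proof -
    have "((\<lambda>t. Y * EE e Y t / NN Y t / (1 + e)) has_real_derivative (1 + e) * pI e Y t / (1 + e)) (at t)"
      by (rule DERIV_cdivide[OF d2a])
    then show ?thesis using e by simp
  qed
  have dH: "(H has_vector_derivative h t) (at t)" for t
  proof -
    have "(H has_vector_derivative (of_real (pR e Y t + 2 * e * qq e Y t) + \<i> * of_real (pI e Y t))) (at t)"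
      unfolding H_def[abs_def]
      by (intro has_vector_derivative_add has_vector_derivative_mult_right has_vector_derivative_of_real d1 d2)
    moreover have "of_real (pR e Y t + 2 * e * qq e Y t) + \<i> * of_real (pI e Y t) = h t"
      unfolding h_def phi_def by simp
    ultimately show ?thesis by simp
  qed
  have hc: "continuous_on UNIV h"
    unfolding h_def[abs_def] by (intro continuous_intros phi_cont[OF Y] qq_cont[OF Y])
  have hi: "integrable lborel h"
    unfolding h_def[abs_def]
    by (intro Bochner_Integration.integrable_add phi_integrable[OF Y e] integrable_of_real
        integrable_mult_right qq_integrable[OF Y e])
  define K where "K = (Y^2) powr (-e)"
  have Hb: "norm (H t) \<le> K * 2 / \<bar>t\<bar>" if t: "\<bar>t\<bar> \<ge> \<bar>Y\<bar>" for t
  proof -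
    have Np: "NN Y t > 0" using NN_pos[OF Y] .
    have tp: "\<bar>t\<bar> > 0" using t Y by linarith
    have E: "EE e Y t \<le> K" "EE e Y t \<ge> 0" using EE_le[OF Y e] EE_nonneg unfolding K_def by auto
    have "norm (H t) \<le> \<bar>- t * EE e Y t / NN Y t\<bar> + \<bar>Y * EE e Y t / NN Y t / (1 + e)\<bar>"
      unfolding H_def by (rule norm_cplx_le)
    also have "\<dots> = \<bar>t\<bar> * EE e Y t / NN Y t + \<bar>Y\<bar> * EE e Y t / ((1 + e) * NN Y t)"
      using Np E e by (simp add: abs_mult abs_divide mult.commute)
    also have "\<dots> \<le> \<bar>t\<bar> * K / NN Y t + \<bar>Y\<bar> * K / NN Y t"
    proof (intro add_mono)
      show "\<bar>t\<bar> * EE e Y t / NN Y t \<le> \<bar>t\<bar> * K / NN Y t"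
        using E Np by (intro divide_right_mono mult_left_mono) auto
      have "\<bar>Y\<bar> * EE e Y t / ((1 + e) * NN Y t) \<le> \<bar>Y\<bar> * EE e Y t / (1 * NN Y t)"
        using E Np e by (intro divide_left_mono mult_right_mono mult_nonneg_nonneg) auto
      also have "\<dots> \<le> \<bar>Y\<bar> * K / NN Y t"
        using E Np by (simp add: divide_right_mono mult_left_mono)
      finally show "\<bar>Y\<bar> * EE e Y t / ((1 + e) * NN Y t) \<le> \<bar>Y\<bar> * K / NN Y t" .
    qed
    also have "\<dots> = K * (\<bar>t\<bar> + \<bar>Y\<bar>) / NN Y t" by (simp add: add_divide_distrib algebra_simps)
    also have "\<dots> \<le> K * (2 * \<bar>t\<bar>) / (\<bar>t\<bar> * \<bar>t\<bar>)"
    proof (rule frac_le)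
      show "0 \<le> K * (2 * \<bar>t\<bar>)" unfolding K_def by simp
      show "K * (\<bar>t\<bar> + \<bar>Y\<bar>) \<le> K * (2 * \<bar>t\<bar>)" using t unfolding K_def by (intro mult_left_mono) auto
      show "0 < \<bar>t\<bar> * \<bar>t\<bar>" by (rule mult_pos_pos[OF tp tp])
      show "\<bar>t\<bar> * \<bar>t\<bar> \<le> NN Y t" using NN_facts(3)[of t Y] by (simp add: power2_eq_square abs_mult_self_eq)
    qed
    also have "\<dots> = K * 2 / \<bar>t\<bar>" using tp by (simp add: field_simps)
    finally show ?thesis .
  qed
  have top: "(H \<longlongrightarrow> 0) at_top"
  proof (rule Lim_null_comparison[OF _ abs_decay(1)])
    show "\<forall>\<^sub>F t in at_top. norm (H t) \<le> K * 2 / \<bar>t\<bar>"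
      using eventually_ge_at_top[of "\<bar>Y\<bar>"] by eventually_elim (rule Hb, simp)
  qed
  have bot: "(H \<longlongrightarrow> 0) at_bot"
  proof (rule Lim_null_comparison[OF _ abs_decay(2)])
    show "\<forall>\<^sub>F t in at_bot. norm (H t) \<le> K * 2 / \<bar>t\<bar>"
      using eventually_le_at_bot[of "- \<bar>Y\<bar>"] by eventually_elim (rule Hb, simp)
  qed
  have "(LBINT t. h t) = 0" by (rule integral_deriv_zero[OF dH hc hi top bot])
  moreover have "(LBINT t. h t) = (LBINT t. phi e Y t) + of_real (2 * e * (LBINT t. qq e Y t))"
    unfolding h_def
    by (subst Bochner_Integration.integral_add) (auto intro!: phi_integrable[OF Y e] integrable_of_real
        integrable_mult_right qq_integrable[OF Y e])
  ultimately show ?thesis by (simp add: eq_neg_iff_add_eq_0)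
qed

definition Jf :: "real \<Rightarrow> real" where "Jf e = (LBINT s. qq e 1 s)"

lemma qq_scale_pt: assumes Y: "Y \<noteq> 0" and e: "e \<ge> 0"
  shows "qq e Y (0 + Y * x) = (Y^2) powr (-e) / Y^2 * qq e 1 x"
proof -
  have N: "NN Y (Y * x) = Y^2 * NN 1 x" by (simp add: NN_def power_mult_distrib algebra_simps)
  have N1: "NN 1 x > 0" using NN_pos[of 1 x] by simp
  have EEf: "EE e Y (Y * x) = (Y^2) powr (-e) * EE e 1 x"
    unfolding EE_def N using N1 by (simp add: powr_mult)
  have "qq e Y (0 + Y * x) = (Y * x)^2 * ((Y^2) powr (-e) * EE e 1 x) / (Y^2 * NN 1 x)^2"
    unfolding add_0_left qq_def N EEf ..
  also have "\<dots> = (Y^2) powr (-e) / Y^2 * qq e 1 x"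
    unfolding qq_def using Y N1 by (simp add: field_simps power_mult_distrib power2_eq_square)
  finally show ?thesis .
qed

lemma qq_scale: assumes Y: "Y \<noteq> 0" and e: "e \<ge> 0"
  shows "(LBINT t. qq e Y t) = \<bar>Y\<bar> powr (-1 - 2 * e) * Jf e"
proof -
  have "(LBINT t. qq e Y t) = \<bar>Y\<bar> *\<^sub>R (LBINT x. qq e Y (0 + Y * x))"
    by (rule lborel_integral_real_affine[OF Y])
  also have "\<dots> = \<bar>Y\<bar> * ((Y^2) powr (-e) / Y^2 * Jf e)"
    unfolding qq_scale_pt[OF Y e] Jf_def by simp
  also have "\<bar>Y\<bar> * ((Y^2) powr (-e) / Y^2 * Jf e) = \<bar>Y\<bar> powr (-1 - 2 * e) * Jf e"
  proof -
    have a: "\<bar>Y\<bar> > 0" using Y by simp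
    have Y2: "Y^2 = \<bar>Y\<bar> powr (2::real)" using a by (simp add: powr_numeral)
    have "(Y^2) powr (-e) = \<bar>Y\<bar> powr (-2 * e)"
      unfolding Y2 powr_powr by simp
    moreover have "\<bar>Y\<bar> / Y^2 = \<bar>Y\<bar> powr (-1)"
    proof -
      have "\<bar>Y\<bar> / Y^2 = inverse \<bar>Y\<bar>" using a by (simp add: field_simps power2_eq_square)
      then show ?thesis using a by (simp add: powr_minus)
    qed
    ultimately have "\<bar>Y\<bar> * ((Y^2) powr (-e) / Y^2) = \<bar>Y\<bar> powr (-1) * \<bar>Y\<bar> powr (-2 * e)"
      by (metis (no_types, lifting) mult.commute times_divide_eq_left times_divide_eq_right)
    also have "\<dots> = \<bar>Y\<bar> powr (-1 + (-2 * e))" by (rule powr_add[symmetric])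
    also have "\<dots> = \<bar>Y\<bar> powr (-1 - 2 * e)" by (simp add: algebra_simps)
    finally have "\<bar>Y\<bar> * ((Y^2) powr (-e) / Y^2) = \<bar>Y\<bar> powr (-1 - 2 * e)" .
    then show ?thesis by (metis mult.assoc times_divide_eq_left times_divide_eq_right)
  qed
  finally show ?thesis .
qed

lemma EE_tendsto: assumes Y: "Y \<noteq> 0"
  shows "((\<lambda>e. EE e Y t) \<longlongrightarrow> EE e0 Y t) (at e0)"
proof -
  have "((\<lambda>e. NN Y t powr (-e)) \<longlongrightarrow> NN Y t powr (-e0)) (at e0)"
    using NN_pos[OF Y, of t] by (intro tendsto_intros) auto
  then show ?thesis unfolding EE_def .
qed

lemma EE_tendsto_right: assumes Y: "Y \<noteq> 0"
  shows "((\<lambda>e. EE e Y t) \<longlongrightarrow> EE 0 Y t) (at_right 0)"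
  by (rule tendsto_mono[OF at_within_le_at EE_tendsto[OF Y]])

lemma Jf_tendsto: "(Jf \<longlongrightarrow> Jf 0) (at_right 0)"
proof -
  have "((\<lambda>x. Jf (inverse x)) \<longlongrightarrow> Jf 0) at_top"
    unfolding Jf_def
  proof (rule integral_dominated_convergence_at_top[where w="\<lambda>s. 1 / (s^2 + 1^2)"])
    show "qq 0 1 \<in> borel_measurable lborel" by (rule meas_cont[OF qq_cont]) simp
    show "qq (inverse x) 1 \<in> borel_measurable lborel" for x by (rule meas_cont[OF qq_cont]) simp
    show "integrable lborel (\<lambda>s::real. 1 / (s^2 + 1^2))" by (rule invN_int(1)) simp
    show "AE s in lborel. ((\<lambda>x. qq (inverse x) 1 s) \<longlongrightarrow> qq 0 1 s) at_top"
    proof (rule AE_I2)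
      fix s :: real
      have "((\<lambda>e. qq e 1 s) \<longlongrightarrow> qq 0 1 s) (at_right 0)"
        unfolding qq_def using NN_pos[of 1 s] by (intro tendsto_intros EE_tendsto_right) auto
      then show "((\<lambda>x. qq (inverse x) 1 s) \<longlongrightarrow> qq 0 1 s) at_top"
        by (rule filterlim_at_right_to_top[THEN iffD1])
    qed
    show "\<forall>\<^sub>F x in at_top. AE s in lborel. norm (qq (inverse x) 1 s) \<le> 1 / (s^2 + 1^2)"
      using eventually_gt_at_top[of 0]
    proof eventually_elim
      case (elim x)
      have "0 \<le> inverse x" using elim by simp
      then show ?case using qq_bound[of 1 "inverse x"] by (intro AE_I2) (simp add: NN_def)
    qed
  qed
  then show ?thesis by (rule filterlim_at_right_to_top[THEN iffD2])
qed

lemma int_sign_reindex: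
  fixes D :: int and f :: "real \<Rightarrow> 'a::{comm_monoid_add,t2_space}"
  assumes D: "D \<noteq> 0"
  shows "infsum (\<lambda>n::int. f (c + real_of_int D * of_int n)) UNIV = infsum (\<lambda>n::int. f (c + real_of_int \<bar>D\<bar> * of_int n)) UNIV"
    and "(\<lambda>n::int. f (c + real_of_int D * of_int n)) summable_on UNIV \<longleftrightarrow> (\<lambda>n::int. f (c + real_of_int \<bar>D\<bar> * of_int n)) summable_on UNIV"
proof -
  have bij: "bij_betw uminus (UNIV :: int set) UNIV" by (rule bij_betwI[of _ _ _ uminus]) auto
  have "(\<lambda>n::int. f (c + real_of_int D * of_int n)) = (\<lambda>n::int. f (c + real_of_int \<bar>D\<bar> * of_int n)) \<or>
        (\<lambda>n::int. f (c + real_of_int D * of_int n)) = (\<lambda>n::int. (\<lambda>n. f (c + real_of_int \<bar>D\<bar> * of_int n)) (- n))"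
    by (cases "D \<ge> 0") auto
  then show "infsum (\<lambda>n::int. f (c + real_of_int D * of_int n)) UNIV = infsum (\<lambda>n::int. f (c + real_of_int \<bar>D\<bar> * of_int n)) UNIV"
    and "(\<lambda>n::int. f (c + real_of_int D * of_int n)) summable_on UNIV \<longleftrightarrow> (\<lambda>n::int. f (c + real_of_int \<bar>D\<bar> * of_int n)) summable_on UNIV"
    using infsum_reindex_bij_betw[OF bij, of "\<lambda>n. f (c + real_of_int \<bar>D\<bar> * of_int n)"]
      summable_on_reindex_bij_betw[OF bij, of "\<lambda>n. f (c + real_of_int \<bar>D\<bar> * of_int n)"]
    by auto
qed

lemma powr_small_bound:
  fixes b e :: real assumes b: "b > 0" and e: "0 \<le> e" "e \<le> 1"
  shows "b powr (-e) \<le> 1 + b powr (-1)"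
proof (cases "b \<ge> 1")
  case True
  then have "b powr (-e) \<le> b powr 0" using e by (intro powr_mono) auto
  then have "b powr (-e) \<le> 1" using b by simp
  moreover have "b powr (-1) \<ge> 0" by (rule powr_ge_zero)
  ultimately show ?thesis by linarith
next
  case False
  then have "b powr (-e) \<le> b powr (-1)" using e b by (intro powr_mono') auto
  then show ?thesis by simp
qed

lemma Ysq_powr: fixes Y :: real assumes "Y \<noteq> 0" shows "(Y^2) powr (-e) = \<bar>Y\<bar> powr (-2 * e)"
proof -
  have a: "\<bar>Y\<bar> > 0" using assms by simp
  have Y2: "Y^2 = \<bar>Y\<bar> powr (2::real)" using a by (simp add: powr_numeral)
  show ?thesis unfolding Y2 powr_powr by simp
qed

definition SS :: "real \<Rightarrow> int \<Rightarrow> real \<Rightarrow> real \<Rightarrow> complex" where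
  "SS e D Y c = (\<Sum>\<^sub>\<infinity>n::int. phi e Y (c + real_of_int D * of_int n))"

lemma inner:
  fixes D :: int and Y c e :: real
  assumes D: "D \<noteq> 0" and Y: "Y \<noteq> 0" and e: "0 \<le> e" "e \<le> 1"
  defines "d \<equiv> real_of_int \<bar>D\<bar>"
  shows "(\<lambda>n::int. norm (phi e Y (c + real_of_int D * of_int n))) summable_on UNIV"
    and "norm (SS e D Y c - of_real (- 2 * e * \<bar>Y\<bar> powr (-1 - 2 * e) * Jf e / d)) \<le> 22 * pi * \<bar>Y\<bar> powr (-2 - 2 * e)"
    and "(\<Sum>\<^sub>\<infinity>n::int. norm (phi e Y (c + real_of_int D * of_int n)))
           \<le> pi / d * \<bar>Y\<bar> powr (-1 - 2 * e) + 22 * pi * \<bar>Y\<bar> powr (-2 - 2 * e)"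
proof -
  have d: "d > 0" unfolding d_def using D by simp
  note LC = lattice_compare[OF dphi_deriv[OF Y] dphi_cont[OF Y] d phi_integrable[OF Y e(1)] dphi_integrable[OF Y e], of c]
  have a: "\<bar>Y\<bar> > 0" using Y by simp
  have pw1: "(Y^2) powr (-e) * pi / \<bar>Y\<bar> = pi * \<bar>Y\<bar> powr (-1 - 2 * e)"
  proof -
    have h1: "\<bar>Y\<bar> powr 1 = \<bar>Y\<bar>" using a by simp
    have "(Y^2) powr (-e) / \<bar>Y\<bar> = \<bar>Y\<bar> powr (-2 * e) / \<bar>Y\<bar> powr 1"
      unfolding Ysq_powr[OF Y] h1 ..
    also have "\<dots> = \<bar>Y\<bar> powr (-2 * e - 1)" by (rule powr_diff[symmetric])
    also have "\<dots> = \<bar>Y\<bar> powr (-1 - 2 * e)" by (rule arg_cong[where f="\<lambda>x. \<bar>Y\<bar> powr x"]) simp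
    finally show ?thesis by (metis mult.commute times_divide_eq_left)
  qed
  have pw2: "22 * pi * (Y^2) powr (-e) / Y^2 = 22 * pi * \<bar>Y\<bar> powr (-2 - 2 * e)"
  proof -
    have h2: "Y^2 = \<bar>Y\<bar> powr 2" using a by (simp add: powr_numeral)
    have "(Y^2) powr (-e) / Y^2 = \<bar>Y\<bar> powr (-2 * e) / \<bar>Y\<bar> powr 2"
      unfolding Ysq_powr[OF Y] by (subst h2) (rule refl)
    also have "\<dots> = \<bar>Y\<bar> powr (-2 * e - 2)" by (rule powr_diff[symmetric])
    also have "\<dots> = \<bar>Y\<bar> powr (-2 - 2 * e)" by (rule arg_cong[where f="\<lambda>x. \<bar>Y\<bar> powr x"]) simp
    finally show ?thesis by (metis mult.assoc times_divide_eq_right)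
  qed
  have IN: "(LBINT x. norm (dphi e Y x)) \<le> 22 * pi * \<bar>Y\<bar> powr (-2 - 2 * e)"
    using int_norm_dphi[OF Y e] pw2 by simp
  have IP: "(LBINT x. norm (phi e Y x)) \<le> pi * \<bar>Y\<bar> powr (-1 - 2 * e)"
    using int_norm_phi[OF Y e(1)] pw1 by simp
  have intphi: "(1/d) *\<^sub>R (LBINT x. phi e Y x) = of_real (- 2 * e * \<bar>Y\<bar> powr (-1 - 2 * e) * Jf e / d)"
    unfolding int_phi[OF Y e(1)] qq_scale[OF Y e(1)] by (simp add: scaleR_conv_of_real)
  have re1: "(\<lambda>n::int. norm (phi e Y (c + real_of_int D * of_int n))) summable_on UNIV
     \<longleftrightarrow> (\<lambda>n::int. norm (phi e Y (c + d * of_int n))) summable_on UNIV"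
    unfolding d_def by (rule int_sign_reindex(2)[OF D, of "\<lambda>t. norm (phi e Y t)"])
  show "(\<lambda>n::int. norm (phi e Y (c + real_of_int D * of_int n))) summable_on UNIV"
    unfolding re1 by (rule LC(1))
  have "SS e D Y c = (\<Sum>\<^sub>\<infinity>n::int. phi e Y (c + d * of_int n))"
    unfolding SS_def d_def by (rule int_sign_reindex(1)[OF D])
  then show "norm (SS e D Y c - of_real (- 2 * e * \<bar>Y\<bar> powr (-1 - 2 * e) * Jf e / d)) \<le> 22 * pi * \<bar>Y\<bar> powr (-2 - 2 * e)"
    using LC(2) IN intphi by simp
  have "(\<Sum>\<^sub>\<infinity>n::int. norm (phi e Y (c + real_of_int D * of_int n))) = (\<Sum>\<^sub>\<infinity>n::int. norm (phi e Y (c + d * of_int n)))"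
    unfolding d_def by (rule int_sign_reindex(1)[OF D, of "\<lambda>t. norm (phi e Y t)"])
  also have "\<dots> \<le> (1/d) * (LBINT x. norm (phi e Y x)) + (LBINT x. norm (dphi e Y x))" by (rule LC(3))
  also have "\<dots> \<le> (1/d) * (pi * \<bar>Y\<bar> powr (-1 - 2 * e)) + 22 * pi * \<bar>Y\<bar> powr (-2 - 2 * e)"
    using IN IP d by (intro add_mono mult_left_mono) auto
  finally show "(\<Sum>\<^sub>\<infinity>n::int. norm (phi e Y (c + real_of_int D * of_int n)))
           \<le> pi / d * \<bar>Y\<bar> powr (-1 - 2 * e) + 22 * pi * \<bar>Y\<bar> powr (-2 - 2 * e)" by simp
qed

lemma EE0: "Y \<noteq> 0 \<Longrightarrow> EE 0 Y t = 1"
  using NN_pos[of Y t] by (simp add: EE_def)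

lemma phi_tendsto: assumes Y: "Y \<noteq> 0"
  shows "((\<lambda>e. phi e Y t) \<longlongrightarrow> phi 0 Y t) (at_right 0)"
  unfolding phi_def pR_def pI_def using NN_pos[OF Y, of t]
  by (intro tendsto_intros EE_tendsto_right[OF Y]) auto

lemma SS_tendsto:
  assumes D: "D \<noteq> 0" and Y: "Y \<noteq> 0"
  shows "((\<lambda>e. SS e D Y c) \<longlongrightarrow> SS 0 D Y c) (at_right 0)"
  unfolding SS_def
proof (rule infsum_tendsto_dominated)
  define K where "K = 1 + (Y^2) powr (-1)"
  show "(\<lambda>n. K * norm (phi 0 Y (c + real_of_int D * of_int n))) summable_on UNIV"
    by (intro summable_on_cmult_right inner(1)[OF D Y]) auto
  show "\<forall>\<^sub>F e in at_right 0. \<forall>n\<in>UNIV. norm (phi e Y (c + real_of_int D * of_int n)) \<le> K * norm (phi 0 Y (c + real_of_int D * of_int n))"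
  proof (rule eventually_at_rightI[of 0 1])
    fix e :: real assume e: "e \<in> {0<..<1}"
    show "\<forall>n\<in>UNIV. norm (phi e Y (c + real_of_int D * of_int n)) \<le> K * norm (phi 0 Y (c + real_of_int D * of_int n))"
    proof
      fix n :: int
      define t where "t = c + real_of_int D * of_int n"
      have Np: "NN Y t > 0" using NN_pos[OF Y] .
      have "norm (phi e Y t) \<le> (Y^2) powr (-e) / NN Y t" using phi_bound[OF Y] e by simp
      also have "\<dots> \<le> K / NN Y t"
        unfolding K_def using Np e Y by (intro divide_right_mono powr_small_bound) auto
      also have "\<dots> = K * norm (phi 0 Y t)" unfolding norm_phi[OF Y] EE0[OF Y] by simp
      finally show "norm (phi e Y (c + real_of_int D * of_int n)) \<le> K * norm (phi 0 Y (c + real_of_int D * of_int n))"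
        unfolding t_def .
    qed
  qed simp
  show "((\<lambda>e. phi e Y (c + real_of_int D * of_int n)) \<longlongrightarrow> phi 0 Y (c + real_of_int D * of_int n)) (at_right 0)" for n
    by (rule phi_tendsto[OF Y])
qed

lemma term_eq:
  fixes z :: complex and a1 a2 D m n :: int
  assumes y: "Im z > 0" and m: "a1 + D * m \<noteq> 0"
  shows "(let w = z * of_int (a1 + D * m) + of_int (a2 + D * n)
          in 1 / (w ^ 2 * complex_of_real (cmod w powr (2 * e))))
       = phi e (Im z * real_of_int (a1 + D * m)) ((Re z * real_of_int (a1 + D * m) + real_of_int a2) + real_of_int D * of_int n)"
proof -
  have w: "z * of_int (a1 + D * m) + of_int (a2 + D * n)
        = Complex ((Re z * real_of_int (a1 + D * m) + real_of_int a2) + real_of_int D * of_int n) (Im z * real_of_int (a1 + D * m))"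
    by (simp add: complex_eq_iff)
  have u: "real_of_int (a1 + D * m) \<noteq> 0" using m by (metis of_int_eq_0_iff)
  have Y: "Im z * real_of_int (a1 + D * m) \<noteq> 0" using y u by (metis mult_eq_0_iff less_irrefl)
  show ?thesis unfolding Let_def w by (rule term_phi[OF Y])
qed

definition FFc :: "int \<Rightarrow> int \<Rightarrow> int \<Rightarrow> complex \<Rightarrow> real \<Rightarrow> int \<Rightarrow> complex" where
  "FFc a1 a2 D z e m = SS e D (Im z * real_of_int (a1 + D * m)) (Re z * real_of_int (a1 + D * m) + real_of_int a2)"

lemma main_limit:
  fixes a1 a2 D :: int and z :: complex
  assumes D: "D \<noteq> 0" and y: "Im z > 0"
  shows "((\<lambda>e. sigma_eps e z a1 a2 D) \<longlongrightarrow>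
            (\<Sum>\<^sub>\<infinity>m\<in>{m. a1 + D * m \<noteq> 0}. FFc a1 a2 D z 0 m)
              + of_real (- 2 * Jf 0 / ((real_of_int \<bar>D\<bar>)^2 * Im z))) (at_right 0)"
    and "(\<lambda>m. norm (FFc a1 a2 D z 0 m)) summable_on {m. a1 + D * m \<noteq> 0}"
    and "(\<Sum>\<^sub>\<infinity>m\<in>{m. a1 + D * m \<noteq> 0}. norm (FFc a1 a2 D z 0 m))
           \<le> 22 * pi * Im z powr (-2) * (\<Sum>\<^sub>\<infinity>m\<in>{m. a1 + D * m \<noteq> 0}. \<bar>real_of_int (a1 + D * m)\<bar> powr (-2))"
proof -
  define Mset where "Mset = {m. a1 + D * m \<noteq> 0}"
  define d where "d = real_of_int \<bar>D\<bar>"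
  have d: "d > 0" unfolding d_def using D by simp
  define uu where "uu m = real_of_int (a1 + D * m)" for m
  define Y where "Y m = Im z * uu m" for m
  define c where "c m = Re z * uu m + real_of_int a2" for m
  have FF: "FFc a1 a2 D z e m = SS e D (Y m) (c m)" for e m
    unfolding FFc_def Y_def c_def uu_def ..
  have uu1: "\<bar>uu m\<bar> \<ge> 1" if "m \<in> Mset" for m
  proof -
    have "a1 + D * m \<noteq> 0" using that unfolding Mset_def by simp
    then have "\<bar>a1 + D * m\<bar> \<ge> 1" by linarith
    then show ?thesis unfolding uu_def by (metis of_int_1_le_iff of_int_abs)
  qed
  have Yne: "Y m \<noteq> 0" if "m \<in> Mset" for m
    using uu1[OF that] y unfolding Y_def by auto
  have Ypow: "\<bar>Y m\<bar> powr p = Im z powr p * \<bar>uu m\<bar> powr p" if "m \<in> Mset" for m p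
    unfolding Y_def abs_mult using y uu1[OF that] by (simp add: powr_mult)
  define Z where "Z s = (\<Sum>\<^sub>\<infinity>m\<in>Mset. \<bar>uu m\<bar> powr (-s))" for s
  have zs: "(\<lambda>m. \<bar>uu m\<bar> powr (-s)) summable_on Mset" if "s > 1" for s
    unfolding Mset_def uu_def using zeta_like(1)[OF D that] .
  have zl: "((\<lambda>e. e * Z (1 + 2 * e)) \<longlongrightarrow> 1 / d) (at_right 0)"
    unfolding Z_def Mset_def uu_def d_def using zeta_like(2)[OF D] .
  define R where "R e m = complex_of_real (- 2 * e * \<bar>Y m\<bar> powr (-1 - 2 * e) * Jf e / d)" for e m
  have I2: "norm (FFc a1 a2 D z e m - R e m) \<le> 22 * pi * \<bar>Y m\<bar> powr (-2 - 2 * e)"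
    if "m \<in> Mset" "0 \<le> e" "e \<le> 1" for m e
    unfolding FF R_def d_def using inner(2)[OF D Yne[OF that(1)] that(2,3)] .
  have I2b: "22 * pi * \<bar>Y m\<bar> powr (-2 - 2 * e) = (22 * pi * Im z powr (-2 - 2 * e)) * \<bar>uu m\<bar> powr (-(2 + 2 * e))"
    if "m \<in> Mset" for m e
    unfolding Ypow[OF that] by simp
  define Mdom where "Mdom m = (22 * pi * Im z powr (-2) * (1 + ((Im z)^2) powr (-1))) * \<bar>uu m\<bar> powr (-2)" for m
  have Mdom_sum: "Mdom summable_on Mset"
    unfolding Mdom_def by (intro summable_on_cmult_right) (use zs[of 2] in simp)
  have Mdom_bound: "22 * pi * \<bar>Y m\<bar> powr (-2 - 2 * e) \<le> Mdom m" if "m \<in> Mset" "0 \<le> e" "e \<le> 1" for m e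
  proof -
    have a: "Im z powr (-2 - 2 * e) = Im z powr (-2) * Im z powr (-2 * e)"
      by (subst powr_add[symmetric]) simp
    have b: "Im z powr (-2 * e) \<le> 1 + ((Im z)^2) powr (-1)"
    proof -
      have "Im z powr (-2 * e) = ((Im z)^2) powr (-e)" using Ysq_powr[of "Im z" e] y by simp
      also have "\<dots> \<le> 1 + ((Im z)^2) powr (-1)" using y that by (intro powr_small_bound) auto
      finally show ?thesis .
    qed
    have c1: "\<bar>uu m\<bar> powr (-(2 + 2 * e)) \<le> \<bar>uu m\<bar> powr (-2)"
      using uu1[OF that(1)] that by (intro powr_mono) auto
    have "22 * pi * \<bar>Y m\<bar> powr (-2 - 2 * e) = 22 * pi * Im z powr (-2) * Im z powr (-2 * e) * \<bar>uu m\<bar> powr (-(2 + 2 * e))"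
      unfolding I2b[OF that(1)] a by simp
    also have "\<dots> \<le> 22 * pi * Im z powr (-2) * (1 + ((Im z)^2) powr (-1)) * \<bar>uu m\<bar> powr (-2)"
      using b c1 by (intro mult_mono mult_left_mono) auto
    finally show ?thesis unfolding Mdom_def by simp
  qed
  have S1: "sigma_eps e z a1 a2 D = (\<Sum>\<^sub>\<infinity>m\<in>Mset. FFc a1 a2 D z e m)" if e: "0 < e" "e \<le> 1" for e
  proof -
    define f where "f = (\<lambda>(m::int, n::int). let w = z * of_int (a1 + D * m) + of_int (a2 + D * n)
         in 1 / (w ^ 2 * complex_of_real (cmod w powr (2 * e))))"
    have setq: "{(m::int, n::int). a1 + D * m \<noteq> 0} = Sigma Mset (\<lambda>_. UNIV)" unfolding Mset_def by auto
    have fv: "f (m, n) = phi e (Y m) (c m + real_of_int D * of_int n)" if "m \<in> Mset" for m n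
      unfolding f_def Y_def c_def uu_def using term_eq[OF y, of a1 D m a2 n e] that unfolding Mset_def by simp
    have inner1: "(\<lambda>n. norm (f (m, n))) summable_on UNIV" if "m \<in> Mset" for m
      using inner(1)[OF D Yne[OF that] less_imp_le[OF e(1)] e(2), of "c m"] fv[OF that] by simp
    define B where "B m = pi / d * \<bar>Y m\<bar> powr (-1 - 2 * e) + 22 * pi * \<bar>Y m\<bar> powr (-2 - 2 * e)" for m
    have inner3: "(\<Sum>\<^sub>\<infinity>n. norm (f (m, n))) \<le> B m" if "m \<in> Mset" for m
      using inner(3)[OF D Yne[OF that] less_imp_le[OF e(1)] e(2), of "c m"] fv[OF that] unfolding B_def d_def by simp
    have Bsum: "B summable_on Mset"
    proof -
      have "(\<lambda>m. (pi / d * Im z powr (-1 - 2 * e)) * \<bar>uu m\<bar> powr (-(1 + 2 * e))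
              + (22 * pi * Im z powr (-2 - 2 * e)) * \<bar>uu m\<bar> powr (-(2 + 2 * e))) summable_on Mset"
        using e by (intro summable_on_add summable_on_cmult_right zs) auto
      moreover have "B m = (pi / d * Im z powr (-1 - 2 * e)) * \<bar>uu m\<bar> powr (-(1 + 2 * e))
              + (22 * pi * Im z powr (-2 - 2 * e)) * \<bar>uu m\<bar> powr (-(2 + 2 * e))" if "m \<in> Mset" for m
        unfolding B_def Ypow[OF that] by simp
      ultimately show ?thesis by (metis (no_types, lifting) summable_on_cong)
    qed
    have outer: "(\<lambda>m. norm (\<Sum>\<^sub>\<infinity>n. norm (f (m, n)))) summable_on Mset"
    proof -
      have "(\<lambda>m. \<Sum>\<^sub>\<infinity>n. norm (f (m, n))) summable_on Mset"
        using inner3 by (intro summable_on_comparison_test[OF Bsum]) (auto intro: infsum_nonneg)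
      then show ?thesis by (simp add: abs_of_nonneg infsum_nonneg)
    qed
    have sf: "f summable_on Sigma Mset (\<lambda>_. UNIV)"
      unfolding summable_on_iff_abs_summable_on_complex
      using Infinite_Sum.abs_summable_on_Sigma_iff[where f=f and A=Mset and B="\<lambda>_. UNIV"] inner1 outer by auto
    have "sigma_eps e z a1 a2 D = infsum f (Sigma Mset (\<lambda>_. UNIV))"
      unfolding sigma_eps_def setq f_def ..
    also have "\<dots> = (\<Sum>\<^sub>\<infinity>m\<in>Mset. \<Sum>\<^sub>\<infinity>n. f (m, n))"
      by (rule infsum_Sigma_banach[OF sf, symmetric])
    also have "\<dots> = (\<Sum>\<^sub>\<infinity>m\<in>Mset. FFc a1 a2 D z e m)"
      by (intro infsum_cong) (simp add: fv FF SS_def)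
    finally show ?thesis .
  qed
  have R0: "R 0 m = 0" for m unfolding R_def by simp
  have nF0: "norm (FFc a1 a2 D z 0 m) \<le> (22 * pi * Im z powr (-2)) * \<bar>uu m\<bar> powr (-2)" if "m \<in> Mset" for m
    using I2[OF that, of 0] I2b[OF that, of 0] R0 by simp
  have sF0: "(\<lambda>m. norm (FFc a1 a2 D z 0 m)) summable_on Mset"
    using nF0 by (intro summable_on_comparison_test[OF summable_on_cmult_right[OF zs[of 2]]]) auto
  show "(\<lambda>m. norm (FFc a1 a2 D z 0 m)) summable_on {m. a1 + D * m \<noteq> 0}"
    using sF0 unfolding Mset_def .
  have "(\<Sum>\<^sub>\<infinity>m\<in>Mset. norm (FFc a1 a2 D z 0 m)) \<le> (\<Sum>\<^sub>\<infinity>m\<in>Mset. (22 * pi * Im z powr (-2)) * \<bar>uu m\<bar> powr (-2))"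
    using nF0 by (intro infsum_mono sF0 summable_on_cmult_right zs) auto
  also have "\<dots> = 22 * pi * Im z powr (-2) * (\<Sum>\<^sub>\<infinity>m\<in>Mset. \<bar>uu m\<bar> powr (-2))"
    by (rule infsum_cmult_right')
  finally show "(\<Sum>\<^sub>\<infinity>m\<in>{m. a1 + D * m \<noteq> 0}. norm (FFc a1 a2 D z 0 m))
           \<le> 22 * pi * Im z powr (-2) * (\<Sum>\<^sub>\<infinity>m\<in>{m. a1 + D * m \<noteq> 0}. \<bar>real_of_int (a1 + D * m)\<bar> powr (-2))"
    unfolding Mset_def uu_def .
  define G where "G e m = FFc a1 a2 D z e m - R e m" for e m
  have Gsum: "G e summable_on Mset" if "0 \<le> e" "e \<le> 1" for e
    unfolding summable_on_iff_abs_summable_on_complex G_def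
    using that by (intro summable_on_comparison_test[OF Mdom_sum]) (auto intro: order_trans[OF I2 Mdom_bound])
  define KK where "KK e = - 2 * e * Im z powr (-1 - 2 * e) * Jf e / d" for e
  have Rhas: "(R e has_sum of_real (KK e * Z (1 + 2 * e))) Mset" if "0 < e" for e
  proof -
    have "((\<lambda>m. \<bar>uu m\<bar> powr (-(1 + 2 * e))) has_sum Z (1 + 2 * e)) Mset"
      unfolding Z_def using zs[of "1 + 2 * e"] that by (intro has_sum_infsum) auto
    then have "((\<lambda>m. of_real (KK e * \<bar>uu m\<bar> powr (-(1 + 2 * e))) :: complex) has_sum of_real (KK e * Z (1 + 2 * e))) Mset"
      by (intro has_sum_of_real has_sum_cmult_right)
    moreover have "R e m = of_real (KK e * \<bar>uu m\<bar> powr (-(1 + 2 * e)))" if "m \<in> Mset" for m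
      unfolding R_def KK_def Ypow[OF that] by (simp add: algebra_simps)
    ultimately show ?thesis by (metis (no_types, lifting) has_sum_cong)
  qed
  have ev: "\<forall>\<^sub>F e in at_right 0. sigma_eps e z a1 a2 D = (\<Sum>\<^sub>\<infinity>m\<in>Mset. G e m) + of_real (KK e * Z (1 + 2 * e))"
  proof (rule eventually_at_rightI[of 0 1])
    fix e :: real assume e: "e \<in> {0<..<1}"
    have "sigma_eps e z a1 a2 D = (\<Sum>\<^sub>\<infinity>m\<in>Mset. FFc a1 a2 D z e m)"
      using e by (intro S1) auto
    also have "\<dots> = (\<Sum>\<^sub>\<infinity>m\<in>Mset. G e m + R e m)"
      unfolding G_def by simp
    also have "\<dots> = (\<Sum>\<^sub>\<infinity>m\<in>Mset. G e m) + (\<Sum>\<^sub>\<infinity>m\<in>Mset. R e m)"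
      using e by (intro infsum_add Gsum has_sum_imp_summable[OF Rhas]) auto
    also have "(\<Sum>\<^sub>\<infinity>m\<in>Mset. R e m) = of_real (KK e * Z (1 + 2 * e))"
      using e by (intro infsumI Rhas) auto
    finally show "sigma_eps e z a1 a2 D = (\<Sum>\<^sub>\<infinity>m\<in>Mset. G e m) + of_real (KK e * Z (1 + 2 * e))" .
  qed simp
  have LG: "((\<lambda>e. \<Sum>\<^sub>\<infinity>m\<in>Mset. G e m) \<longlongrightarrow> (\<Sum>\<^sub>\<infinity>m\<in>Mset. G 0 m)) (at_right 0)"
  proof (rule infsum_tendsto_dominated[OF Mdom_sum])
    show "\<forall>\<^sub>F e in at_right 0. \<forall>m\<in>Mset. norm (G e m) \<le> Mdom m"
      by (rule eventually_at_rightI[of 0 1]) (auto simp: G_def intro: order_trans[OF I2 Mdom_bound])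
    show "((\<lambda>e. G e m) \<longlongrightarrow> G 0 m) (at_right 0)" if "m \<in> Mset" for m
      unfolding G_def FF R_def
      by (intro tendsto_intros SS_tendsto[OF D Yne[OF that]] Jf_tendsto) (use Yne[OF that] d in auto)
  qed
  have G0: "G 0 m = FFc a1 a2 D z 0 m" for m unfolding G_def R0 by simp
  have KKZ: "KK e * Z (1 + 2 * e) = - 2 * Jf e / d * Im z powr (-1 - 2 * e) * (e * Z (1 + 2 * e))" for e
    unfolding KK_def by (simp add: algebra_simps)
  have LR: "((\<lambda>e. of_real (KK e * Z (1 + 2 * e)) :: complex) \<longlongrightarrow>
            of_real (- 2 * Jf 0 / d * Im z powr (-1 - 2 * 0) * (1 / d))) (at_right 0)"
    unfolding KKZ by (intro tendsto_intros Jf_tendsto zl) (use y d in auto)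
  have val: "- 2 * Jf 0 / d * Im z powr (-1 - 2 * 0) * (1 / d) = - 2 * Jf 0 / ((real_of_int \<bar>D\<bar>)^2 * Im z)"
    using y d unfolding d_def by (simp add: powr_minus field_simps power2_eq_square)
  have "((\<lambda>e. (\<Sum>\<^sub>\<infinity>m\<in>Mset. G e m) + of_real (KK e * Z (1 + 2 * e))) \<longlongrightarrow>
         (\<Sum>\<^sub>\<infinity>m\<in>Mset. G 0 m) + of_real (- 2 * Jf 0 / d * Im z powr (-1 - 2 * 0) * (1 / d))) (at_right 0)"
    by (rule tendsto_add[OF LG LR])
  then have "((\<lambda>e. sigma_eps e z a1 a2 D) \<longlongrightarrow>
         (\<Sum>\<^sub>\<infinity>m\<in>Mset. G 0 m) + of_real (- 2 * Jf 0 / d * Im z powr (-1 - 2 * 0) * (1 / d))) (at_right 0)"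
    by (rule Lim_transform_eventually) (use ev in \<open>auto elim: eventually_mono\<close>)
  then show "((\<lambda>e. sigma_eps e z a1 a2 D) \<longlongrightarrow>
            (\<Sum>\<^sub>\<infinity>m\<in>{m. a1 + D * m \<noteq> 0}. FFc a1 a2 D z 0 m)
              + of_real (- 2 * Jf 0 / ((real_of_int \<bar>D\<bar>)^2 * Im z))) (at_right 0)"
    unfolding val G0 Mset_def .
qed

theorem lemma1p7:
  fixes a1 a2 D :: int
  assumes "D \<noteq> 0"
  shows "\<exists>L :: complex \<Rightarrow> complex.
           (\<forall>z. Im z > 0 \<longrightarrow> ((\<lambda>eps. sigma_eps eps z a1 a2 D) \<longlongrightarrow> L z) (at_right 0))
         \<and> (L \<longlongrightarrow> 0) (filtercomap Im at_top)"
proof -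
  define d where "d = real_of_int \<bar>D\<bar>"
  define L where "L z = (\<Sum>\<^sub>\<infinity>m\<in>{m. a1 + D * m \<noteq> 0}. FFc a1 a2 D z 0 m)
              + of_real (- 2 * Jf 0 / ((real_of_int \<bar>D\<bar>)^2 * Im z))" for z
  define Z2 where "Z2 = (\<Sum>\<^sub>\<infinity>m\<in>{m. a1 + D * m \<noteq> 0}. \<bar>real_of_int (a1 + D * m)\<bar> powr (-2))"
  define C1 where "C1 = 22 * pi * Z2"
  define C2 where "C2 = 2 * \<bar>Jf 0\<bar> / (real_of_int \<bar>D\<bar>)^2"
  have lim: "\<forall>z. Im z > 0 \<longrightarrow> ((\<lambda>eps. sigma_eps eps z a1 a2 D) \<longlongrightarrow> L z) (at_right 0)"
    unfolding L_def using main_limit(1)[OF assms] by blast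
  have bound: "norm (L z) \<le> C1 * Im z powr (-2) + C2 / Im z" if y: "Im z > 0" for z
  proof -
    have s: "(\<lambda>m. norm (FFc a1 a2 D z 0 m)) summable_on {m. a1 + D * m \<noteq> 0}"
      by (rule main_limit(2)[OF assms y])
    have "norm (\<Sum>\<^sub>\<infinity>m\<in>{m. a1 + D * m \<noteq> 0}. FFc a1 a2 D z 0 m)
          \<le> (\<Sum>\<^sub>\<infinity>m\<in>{m. a1 + D * m \<noteq> 0}. norm (FFc a1 a2 D z 0 m))"
      by (rule norm_infsum_bound[OF s])
    also have "\<dots> \<le> 22 * pi * Im z powr (-2) * Z2"
      unfolding Z2_def by (rule main_limit(3)[OF assms y])
    finally have n1: "norm (\<Sum>\<^sub>\<infinity>m\<in>{m. a1 + D * m \<noteq> 0}. FFc a1 a2 D z 0 m) \<le> C1 * Im z powr (-2)"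
      unfolding C1_def by (simp add: algebra_simps)
    have n2: "norm (complex_of_real (- 2 * Jf 0 / ((real_of_int \<bar>D\<bar>)^2 * Im z))) = C2 / Im z"
      unfolding C2_def norm_of_real using y by (simp add: abs_mult abs_divide field_simps)
    show ?thesis unfolding L_def
      using norm_triangle_ineq[of "\<Sum>\<^sub>\<infinity>m\<in>{m. a1 + D * m \<noteq> 0}. FFc a1 a2 D z 0 m"
          "complex_of_real (- 2 * Jf 0 / ((real_of_int \<bar>D\<bar>)^2 * Im z))"] n1 n2
      by linarith
  qed
  have h: "((\<lambda>y::real. C1 * y powr (-2) + C2 / y) \<longlongrightarrow> 0) at_top"
  proof -
    have "((\<lambda>y::real. C1 * y powr (-2) + C2 / y) \<longlongrightarrow> C1 * 0 + 0) at_top"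
      by (intro tendsto_add tendsto_mult tendsto_const tendsto_neg_powr filterlim_ident
          tendsto_divide_0[OF tendsto_const filterlim_at_top_imp_at_infinity[OF filterlim_ident]]) auto
    then show ?thesis by simp
  qed
  have hc: "((\<lambda>z. C1 * Im z powr (-2) + C2 / Im z) \<longlongrightarrow> 0) (filtercomap Im at_top)"
    using filterlim_compose[OF h filterlim_filtercomap] .
  have "(L \<longlongrightarrow> 0) (filtercomap Im at_top)"
  proof (rule Lim_null_comparison[OF _ hc])
    show "\<forall>\<^sub>F z in filtercomap Im at_top. norm (L z) \<le> C1 * Im z powr (-2) + C2 / Im z"
      using eventually_filtercomapI[OF eventually_gt_at_top[of 0], of Im]
      by eventually_elim (rule bound)
  qed
  then show ?thesis using lim by blast
qed

end
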